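(* Let $N=\{1,\dots,n\}$ and, for each $i\in N$, let $\mathcal{X}_i\subset\mathbb{R}^d$ be nonempty, closed and bounded, with $\tilde{\mathcal{X}}_i=\operatorname{conv}(\mathcal{X}_i)$. Let $A_j$ ($j\in N$) be real $q\times d$ matrices, let $\Omega\subset\mathbb{R}^q$ be a neighborhood of $\{\frac1n\sum_{j\in N}A_jy_j : y_j\in\tilde{\mathcal{X}}_j\ \forall j\}$, and let $\theta_i:\mathcal{X}_i\times\Omega\to\mathbb{R}$ satisfy: (1) for every $i\in N$ and $y\in\Omega$, $x_i\mapsto\theta_i(x_i,y)$ is lower semicontinuous on $\mathcal{X}_i$; (2) there exist constants $H>0,\gamma>0$ such that $|\theta_i(x_i,y')-\theta_i(x_i,y)|\le H\|y'-y\|^\gamma$ for all $i\in N$, $x_i\in\mathcal{X}_i$, $y,y'\in\Omega$. Then the convexified game $\tilde\Gamma$ (defined in the context) admits a pure Nash equilibrium.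
   Context: Notation: $\tilde{\mathcal{X}}=\prod_{i\in N}\tilde{\mathcal{X}}_i$, $\tilde{\mathcal{X}}_{-i}=\prod_{j\ne i}\tilde{\mathcal{X}}_j$. The nonconvex game $\Gamma$ has players $N$, action sets $\mathcal{X}_i$ and costs $f_i(x_i,x_{-i})=\theta_i\big(x_i,\frac1n\sum_{j\in N}A_jx_j\big)$ for $x_i\in\mathcal{X}_i$, $x_{-i}\in\tilde{\mathcal{X}}_{-i}$. Let $\mathcal{S}_d=\{\alpha\in\mathbb{R}^{d+1}:\alpha^k\ge0,\ \sum_k\alpha^k=1\}$. The convexified game $\tilde\Gamma$ has players $N$, action sets $\tilde{\mathcal{X}}_i$ and costs, for $x\in\tilde{\mathcal{X}}$, $\tilde f_i(x_i,x_{-i})=\inf\{\sum_{k=1}^{d+1}\alpha^kf_i(z^k,x_{-i}) : \alpha\in\mathcal{S}_d,\ z^k\in\mathcal{X}_i,\ x_i=\sum_{k=1}^{d+1}\alpha^kz^k\}$. A pure Nash equilibrium of $\tilde\Gamma$ is $x\in\tilde{\mathcal{X}}$ with $\tilde f_i(x_i,x_{-i})\le\tilde f_i(y_i,x_{-i})$ for all $i\in N$ and all $y_i\in\tilde{\mathcal{X}}_i$. *)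

theory Defs
  imports "HOL-Analysis.Analysis"
begin

definition lsc_on :: "'a::topological_space set \<Rightarrow> ('a \<Rightarrow> real) \<Rightarrow> bool" where
  "lsc_on S f \<longleftrightarrow> (\<forall>x\<in>S. \<forall>t. t < f x \<longrightarrow> (\<forall>\<^sub>F z in at x within S. t < f z))"

text \<open>Players are 0..n-1. Action profiles are functions nat => real^'d (only i<n matter).
  Cost of the nonconvex game: f_i(z, x_{-i}) = theta_i(z, (1/n) sum_j A_j x_j) with x_i := z.\<close>
definition game_cost ::
  "nat \<Rightarrow> (nat \<Rightarrow> real^'d \<Rightarrow> real^'q \<Rightarrow> real) \<Rightarrow> (nat \<Rightarrow> real^'d^'q)
     \<Rightarrow> nat \<Rightarrow> real^'d \<Rightarrow> (nat \<Rightarrow> real^'d) \<Rightarrow> real" where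
  "game_cost n \<theta> A i z x = \<theta> i z ((1 / real n) *\<^sub>R (\<Sum>j<n. A j *v (x(i := z)) j))"

definition convexified_cost ::
  "nat \<Rightarrow> (nat \<Rightarrow> (real^'d) set) \<Rightarrow> (nat \<Rightarrow> real^'d \<Rightarrow> real^'q \<Rightarrow> real) \<Rightarrow> (nat \<Rightarrow> real^'d^'q)
     \<Rightarrow> nat \<Rightarrow> real^'d \<Rightarrow> (nat \<Rightarrow> real^'d) \<Rightarrow> real" where
  "convexified_cost n X \<theta> A i xi x =
     Inf {(\<Sum>k<CARD('d) + 1. \<alpha> k * game_cost n \<theta> A i (z k) x) | \<alpha> z.
            (\<forall>k<CARD('d) + 1. 0 \<le> \<alpha> k \<and> z k \<in> X i) \<and>
            (\<Sum>k<CARD('d) + 1. \<alpha> k) = 1 \<and>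
            xi = (\<Sum>k<CARD('d) + 1. \<alpha> k *\<^sub>R z k)}"

definition pure_NE_convexified ::
  "nat \<Rightarrow> (nat \<Rightarrow> (real^'d) set) \<Rightarrow> (nat \<Rightarrow> real^'d \<Rightarrow> real^'q \<Rightarrow> real) \<Rightarrow> (nat \<Rightarrow> real^'d^'q)
     \<Rightarrow> (nat \<Rightarrow> real^'d) \<Rightarrow> bool" where
  "pure_NE_convexified n X \<theta> A x \<longleftrightarrow>
     (\<forall>i<n. x i \<in> convex hull (X i)) \<and>
     (\<forall>i<n. \<forall>y\<in>convex hull (X i).
        convexified_cost n X \<theta> A i (x i) x \<le> convexified_cost n X \<theta> A i y (x(i := y)))"

end

theory Submission
  imports Defs "HOL-Homology.Homology"
begin

definition sqn :: "nat \<Rightarrow> (nat \<Rightarrow> real) \<Rightarrow> real" where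
  "sqn m v = (\<Sum>i<m. (v i)^2)"

definition BallE :: "nat \<Rightarrow> (nat \<Rightarrow> real) set" where
  "BallE m = {u. (\<forall>i\<ge>m. u i = 0) \<and> sqn m u \<le> 1}"

definition nrmz :: "nat \<Rightarrow> (nat \<Rightarrow> real) \<Rightarrow> (nat \<Rightarrow> real)" where
  "nrmz m v = (\<lambda>i. if i < m then v i / sqrt (sqn m v) else 0)"

lemma sqn_nonneg: "0 \<le> sqn m v"
  unfolding sqn_def by (simp add: sum_nonneg)

lemma sqn_zero_iff: "sqn m v = 0 \<longleftrightarrow> (\<forall>i<m. v i = 0)"
  unfolding sqn_def by (auto simp: sum_nonneg_eq_0_iff)

lemma sqn_scale: "sqn m (\<lambda>i. t * v i) = t^2 * sqn m v"
  unfolding sqn_def by (simp add: sum_distrib_left power_mult_distrib)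

lemma sqn_nrmz: assumes "\<exists>i<m. v i \<noteq> 0" shows "sqn m (nrmz m v) = 1"
proof -
  have pos: "sqn m v > 0" using assms sqn_zero_iff[of m v] sqn_nonneg[of m v] by auto
  have "sqn m (nrmz m v) = (\<Sum>i<m. (v i / sqrt (sqn m v))^2)"
    by (simp add: sqn_def nrmz_def)
  also have "\<dots> = (\<Sum>i<m. (v i)^2 / sqn m v)"
    using pos by (simp add: power_divide)
  also have "\<dots> = sqn m v / sqn m v" by (simp only: sqn_def sum_divide_distrib)
  finally show ?thesis using pos by simp
qed

lemma sphere_topspace:
  "topspace (nsphere p) = {x. (\<forall>i\<ge>Suc p. x i = 0) \<and> sqn (Suc p) x = 1}"
  unfolding nsphere_def sqn_def by (auto simp: topspace_Euclidean_space lessThan_Suc_atMost)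

lemma cm_comp_real:
  assumes "continuous_map X (top_of_set S) h" "continuous_on S f"
  shows "continuous_map X euclideanreal (\<lambda>x. f (h x))"
proof -
  have "continuous_map (top_of_set S) euclideanreal f" using assms(2) by simp
  from continuous_map_compose[OF assms(1) this] show ?thesis by (simp add: o_def)
qed

lemma cm_into_fun:
  assumes "\<And>k. continuous_map X euclideanreal (\<lambda>x. h x k)" "\<And>x. x \<in> topspace X \<Longrightarrow> h x \<in> S"
  shows "continuous_map X (top_of_set S) (h :: _ \<Rightarrow> nat \<Rightarrow> real)"
proof -
  have "continuous_map X (product_topology (\<lambda>i. euclideanreal) UNIV) h"
    using assms(1) by (simp add: continuous_map_componentwise_UNIV)
  then have "continuous_map X euclidean h" by (simp add: euclidean_product_topology)
  then show ?thesis using assms(2) by (simp add: continuous_map_in_subtopology image_subset_iff)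
qed

lemma cm_nrmz:
  fixes v :: "'a \<Rightarrow> nat \<Rightarrow> real"
  assumes "\<And>i. i < Suc p \<Longrightarrow> continuous_map X euclideanreal (\<lambda>x. v x i)"
    and "\<And>x. x \<in> topspace X \<Longrightarrow> \<exists>i<Suc p. v x i \<noteq> 0"
  shows "continuous_map X (nsphere p) (\<lambda>x. nrmz (Suc p) (v x))"
proof -
  have c: "continuous_map X euclideanreal (\<lambda>x. v x i / sqrt (sqn (Suc p) (v x)))" if "i < Suc p" for i
  proof (rule continuous_map_real_divide)
    show "continuous_map X euclideanreal (\<lambda>x. v x i)" using assms(1) that .
    show "continuous_map X euclideanreal (\<lambda>x. sqrt (sqn (Suc p) (v x)))"
      unfolding sqn_def by (intro continuous_intros assms(1)) auto
    show "sqrt (sqn (Suc p) (v x)) \<noteq> 0" if "x \<in> topspace X" for x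
      using assms(2)[OF that] sqn_zero_iff[of "Suc p" "v x"] by auto
  qed
  have "continuous_map X (Euclidean_space (Suc p)) (\<lambda>x i. if i < Suc p then v x i / sqrt (sqn (Suc p) (v x)) else 0)"
    using c by (simp add: continuous_map_componentwise_Euclidean_space)
  then have "continuous_map X (Euclidean_space (Suc p)) (\<lambda>x. nrmz (Suc p) (v x))"
    by (simp add: nrmz_def)
  moreover have "nrmz (Suc p) (v x) \<in> {x. (\<Sum>i\<le>p. x i ^ 2) = 1}" if "x \<in> topspace X" for x
    using sqn_nrmz[OF assms(2)[OF that]] by (simp add: sqn_def lessThan_Suc_atMost)
  ultimately show ?thesis
    unfolding nsphere_def by (auto simp: continuous_map_in_subtopology)
qed

lemma brouwer_E:
  fixes g :: "(nat \<Rightarrow> real) \<Rightarrow> (nat \<Rightarrow> real)"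
  assumes m: "m = Suc p"
    and cont: "\<And>i. i < m \<Longrightarrow> continuous_on (BallE m) (\<lambda>u. g u i)"
    and into: "\<And>u. u \<in> BallE m \<Longrightarrow> g u \<in> BallE m"
  shows "\<exists>u\<in>BallE m. g u = u"
proof (rule ccontr)
  assume nf: "\<not> ?thesis"
  let ?X = "prod_topology (top_of_set {0..1::real}) (nsphere p)"
  have tsX: "topspace ?X = {0..1} \<times> topspace (nsphere p)" by simp
  have sph_ball: "x \<in> BallE m" if "x \<in> topspace (nsphere p)" for x
    using that m by (simp add: sphere_topspace BallE_def)
  have proj: "continuous_map ?X euclideanreal (\<lambda>z. snd z i)" for i
    using continuous_map_compose[OF continuous_map_snd continuous_map_nsphere_projection[of p i]]
    by (simp add: o_def)
  have tcont: "continuous_map ?X euclideanreal (\<lambda>z. fst z)"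
  proof -
    have a: "continuous_map ?X (top_of_set {0..1::real}) fst" by (rule continuous_map_fst)
    have b: "continuous_map (top_of_set {0..1::real}) euclideanreal id" by simp
    show ?thesis using continuous_map_compose[OF a b] by (simp add: o_def)
  qed
  have sc_ball: "(\<lambda>j. (1 - t) * x j) \<in> BallE m" if "t \<in> {0..1}" "x \<in> topspace (nsphere p)" for t x
  proof -
    have "sqn m (\<lambda>j. (1 - t) * x j) = (1-t)^2" using that m sqn_scale[of m "1-t" x] by (simp add: sphere_topspace)
    also have "\<dots> \<le> 1" using that by (simp add: power_le_one)
    finally show ?thesis using that m by (simp add: BallE_def sphere_topspace)
  qed
  have cm_sc: "continuous_map ?X (top_of_set (BallE m)) (\<lambda>z j. (1 - fst z) * snd z j)"
    by (rule cm_into_fun) (auto intro!: continuous_intros proj tcont sc_ball)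
  have gsc: "continuous_map ?X euclideanreal (\<lambda>z. g (\<lambda>j. (1 - fst z) * snd z j) i)" if "i < m" for i
    using cm_comp_real[OF cm_sc cont[OF that]] .
  have cm_id: "continuous_map ?X (top_of_set (BallE m)) (\<lambda>z. snd z)"
    by (rule cm_into_fun) (auto intro!: proj sph_ball)
  have gx: "continuous_map ?X euclideanreal (\<lambda>z. g (snd z) i)" if "i < m" for i
    using cm_comp_real[OF cm_id cont[OF that]] .
  define h1 where "h1 = (\<lambda>z. nrmz m (\<lambda>i. snd z i - fst z * g (snd z) i))"
  define h2 where "h2 = (\<lambda>z. nrmz m (\<lambda>i. (1 - fst z) * snd z i - g (\<lambda>j. (1 - fst z) * snd z j) i))"
  have nz1: "\<exists>i<m. snd z i - fst z * g (snd z) i \<noteq> 0" if zX: "z \<in> topspace ?X" for z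
  proof (rule ccontr)
    assume "\<not> ?thesis"
    then have eq: "\<And>i. i < m \<Longrightarrow> snd z i = fst z * g (snd z) i" by auto
    obtain t x where z: "z = (t, x)" "t \<in> {0..1}" "x \<in> topspace (nsphere p)" using zX tsX by (cases z) auto
    have xb: "x \<in> BallE m" using sph_ball z by auto
    have gb: "g x \<in> BallE m" using into xb by auto
    have "1 = sqn m x" using z m by (simp add: sphere_topspace)
    also have "\<dots> = sqn m (\<lambda>i. t * g x i)" unfolding sqn_def using eq z by simp
    also have "\<dots> = t^2 * sqn m (g x)" by (rule sqn_scale)
    finally have 1: "1 = t^2 * sqn m (g x)" .
    have "sqn m (g x) \<le> 1" using gb by (simp add: BallE_def)
    moreover have "t^2 \<le> 1" using z by (simp add: power_le_one)
    ultimately have "t^2 * sqn m (g x) \<le> t^2" using mult_left_mono[of "sqn m (g x)" 1 "t^2"] by simp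
    then have "t^2 = 1" using 1 \<open>t^2 \<le> 1\<close> by linarith
    then have "t = 1" using z by (simp add: power2_eq_1_iff)
    then have "\<forall>i<m. x i = g x i" using eq z by simp
    moreover have "\<forall>i\<ge>m. x i = g x i" using xb gb by (simp add: BallE_def)
    ultimately have "g x = x" by (intro ext) (metis not_le)
    then show False using nf xb by blast
  qed
  have nz2: "\<exists>i<m. (1 - fst z) * snd z i - g (\<lambda>j. (1 - fst z) * snd z j) i \<noteq> 0" if zX: "z \<in> topspace ?X" for z
  proof (rule ccontr)
    assume "\<not> ?thesis"
    then have eq: "\<And>i. i < m \<Longrightarrow> (1 - fst z) * snd z i = g (\<lambda>j. (1 - fst z) * snd z j) i" by auto
    obtain t x where z: "z = (t, x)" "t \<in> {0..1}" "x \<in> topspace (nsphere p)" using zX tsX by (cases z) auto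
    let ?v = "\<lambda>j. (1 - t) * x j"
    have vb: "?v \<in> BallE m" using sc_ball z by auto
    have gb: "g ?v \<in> BallE m" using into vb by auto
    have "\<forall>i<m. ?v i = g ?v i" using eq z by simp
    moreover have "\<forall>i\<ge>m. ?v i = g ?v i" using vb gb by (simp add: BallE_def)
    ultimately have "g ?v = ?v" by (intro ext) (metis not_le)
    then show False using nf vb by blast
  qed
  have c1: "continuous_map ?X (nsphere p) h1"
    unfolding h1_def m
    by (rule cm_nrmz) (use nz1 m in \<open>auto intro!: continuous_intros proj tcont gx\<close>)
  have c2: "continuous_map ?X (nsphere p) h2"
    unfolding h2_def m
    by (rule cm_nrmz) (use nz2 m in \<open>auto intro!: continuous_intros proj tcont gsc\<close>)
  have nrmz_id: "nrmz m x = x" if "x \<in> topspace (nsphere p)" for x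
    using that m by (auto simp: nrmz_def sphere_topspace fun_eq_iff)
  have H1: "homotopic_with (\<lambda>x. True) (nsphere p) (nsphere p) id (\<lambda>x. h1 (1, x))"
    unfolding homotopic_with[OF refl]
    by (rule exI[of _ h1]) (use c1 nrmz_id in \<open>auto simp: h1_def\<close>)
  have H2: "homotopic_with (\<lambda>x. True) (nsphere p) (nsphere p) (\<lambda>x. h1 (1, x)) (\<lambda>x. h2 (1, x))"
    unfolding homotopic_with[OF refl]
    by (rule exI[of _ h2]) (use c2 in \<open>auto simp: h1_def h2_def\<close>)
  have "(\<lambda>x. h2 (1, x)) = (\<lambda>x. nrmz m (\<lambda>i. - g (\<lambda>j. 0) i))"
    by (simp add: h2_def)
  then have "homotopic_with (\<lambda>x. True) (nsphere p) (nsphere p) id (\<lambda>x. nrmz m (\<lambda>i. - g (\<lambda>j. 0) i))"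
    using homotopic_with_trans[OF H1 H2] by simp
  then have "contractible_space (nsphere p)"
    unfolding contractible_space_def by blast
  then show False using non_contractible_space_nsphere by blast
qed

definition seq_lsc :: "'a::topological_space set \<Rightarrow> ('a \<Rightarrow> real) \<Rightarrow> bool" where
  "seq_lsc S f \<longleftrightarrow> (\<forall>s z t. (\<forall>m. s m \<in> S) \<and> z \<in> S \<and> s \<longlonglongrightarrow> z \<and> t < f z
      \<longrightarrow> (\<forall>\<^sub>F m in sequentially. t < f (s m)))"

lemma seq_lscD:
  assumes "seq_lsc S f" "\<And>m. s m \<in> S" "z \<in> S" "s \<longlonglongrightarrow> z" "t < f z"
  shows "\<forall>\<^sub>F m in sequentially. t < f (s m)"
  using assms unfolding seq_lsc_def by blast

lemma lsc_on_imp_seq: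
  assumes "lsc_on S f" shows "seq_lsc S f"
  unfolding seq_lsc_def
proof (intro allI impI, elim conjE)
  fix s z t assume sS: "\<forall>m. s m \<in> S" and zS: "z \<in> S" and lim: "s \<longlonglongrightarrow> z" and t: "t < f z"
  have "\<forall>\<^sub>F x in at z within S. t < f x" using assms zS t unfolding lsc_on_def by blast
  then obtain U where U: "open U" "z \<in> U" "\<And>x. x \<in> U \<Longrightarrow> x \<noteq> z \<Longrightarrow> x \<in> S \<Longrightarrow> t < f x"
    unfolding eventually_at_topological by blast
  have "\<forall>\<^sub>F m in sequentially. s m \<in> U" using lim U(1,2) by (rule topological_tendstoD)
  then show "\<forall>\<^sub>F m in sequentially. t < f (s m)"
    by eventually_elim (use U(3) sS t in \<open>metis\<close>)
qed

lemma ev_both: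
  assumes "\<forall>\<^sub>F m in sequentially. P m" "\<forall>\<^sub>F m in sequentially. Q m"
  obtains m where "P m" "Q m"
proof -
  have "\<forall>\<^sub>F m in sequentially. P m \<and> Q m" using assms by (rule eventually_conj)
  then obtain N where "\<forall>m\<ge>N. P m \<and> Q m" unfolding eventually_sequentially by blast
  then show ?thesis using that by blast
qed

lemma seq_compactE':
  fixes S :: "'a::metric_space set" and s :: "nat \<Rightarrow> 'a"
  assumes "compact S" "\<And>m. s m \<in> S"
  obtains l r where "l \<in> S" "strict_mono r" "(s \<circ> r) \<longlonglongrightarrow> l"
proof -
  have "seq_compact S" using assms(1) by (simp add: compact_eq_seq_compact_metric)
  moreover have "\<forall>n. s n \<in> S" using assms(2) by simp
  ultimately have "\<exists>l\<in>S. \<exists>r. strict_mono r \<and> (s \<circ> r) \<longlonglongrightarrow> l"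
    unfolding seq_compact_def by blast
  then obtain l r where "l \<in> S" "strict_mono r" "(s \<circ> r) \<longlonglongrightarrow> l" by blast
  then show ?thesis by (rule that)
qed

lemma seq_lsc_min:
  fixes S :: "'a::metric_space set"
  assumes "compact S" "S \<noteq> {}" "seq_lsc S f"
  shows "\<exists>x\<in>S. \<forall>y\<in>S. f x \<le> f y"
proof -
  have bdd: "\<exists>L. \<forall>x\<in>S. L \<le> f x"
  proof (rule ccontr)
    assume "\<not> ?thesis"
    then have "\<forall>m::nat. \<exists>x\<in>S. f x < - real m" by (auto simp: not_le)
    then obtain s where s: "\<And>m. s m \<in> S" "\<And>m. f (s m) < - real m" by metis
    obtain l r where lr: "l \<in> S" "strict_mono r" "(s \<circ> r) \<longlonglongrightarrow> l"
      by (rule seq_compactE'[OF assms(1) s(1)])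
    have e1: "\<forall>\<^sub>F m in sequentially. f l - 1 < f ((s \<circ> r) m)"
      by (rule seq_lscD[OF assms(3) _ lr(1) lr(3)]) (auto simp: s(1))
    have e2: "\<forall>\<^sub>F m in sequentially. real m > 1 - f l"
    proof -
      have "\<forall>\<^sub>F m in sequentially. 2 - f l \<le> real m"
        using filterlim_real_sequentially unfolding filterlim_at_top by blast
      then show ?thesis by eventually_elim linarith
    qed
    obtain m where "f l - 1 < f ((s \<circ> r) m)" "real m > 1 - f l" by (rule ev_both[OF e1 e2])
    moreover have "f ((s \<circ> r) m) < - real (r m)" using s(2) by simp
    moreover have "m \<le> r m" using lr(2) by (rule strict_mono_imp_increasing)
    then have "real m \<le> real (r m)" by simp
    ultimately show False by linarith
  qed
  then obtain L where L: "\<And>x. x \<in> S \<Longrightarrow> L \<le> f x" by blast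
  define c where "c = Inf (f ` S)"
  have bb: "bdd_below (f ` S)" unfolding bdd_below_def using L by auto
  have cle: "c \<le> f y" if "y \<in> S" for y unfolding c_def by (rule cInf_lower[OF imageI[OF that] bb])
  have "\<forall>m::nat. \<exists>x\<in>S. f x < c + 1 / (real m + 1)"
  proof
    fix m :: nat
    have "Inf (f ` S) < c + 1 / (real m + 1)" unfolding c_def by simp
    then show "\<exists>x\<in>S. f x < c + 1 / (real m + 1)" using assms(2) by (simp add: cInf_less_iff[OF _ bb])
  qed
  then obtain s where s: "\<And>m. s m \<in> S" "\<And>m. f (s m) < c + 1 / (real m + 1)" by metis
  obtain l r where lr: "l \<in> S" "strict_mono r" "(s \<circ> r) \<longlonglongrightarrow> l"
    by (rule seq_compactE'[OF assms(1) s(1)])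
  have "f l \<le> c"
  proof (rule ccontr)
    assume "\<not> ?thesis"
    then have d: "f l - c > 0" by simp
    have e1: "\<forall>\<^sub>F m in sequentially. c + (f l - c) / 2 < f ((s \<circ> r) m)"
      by (rule seq_lscD[OF assms(3) _ lr(1) lr(3)]) (use d in \<open>auto simp: s(1) field_simps\<close>)
    have e2: "\<forall>\<^sub>F m in sequentially. 1 / (real m + 1) < (f l - c) / 2"
    proof -
      have "(\<lambda>m. inverse (real (Suc m))) \<longlonglongrightarrow> 0" by (rule LIMSEQ_inverse_real_of_nat)
      then have "\<forall>\<^sub>F m in sequentially. inverse (real (Suc m)) < (f l - c) / 2"
        using d by (intro order_tendstoD(2)) auto
      then show ?thesis by eventually_elim (simp add: inverse_eq_divide add.commute)
    qed
    obtain m where m: "c + (f l - c) / 2 < f ((s \<circ> r) m)" "1 / (real m + 1) < (f l - c) / 2"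
      by (rule ev_both[OF e1 e2])
    have "m \<le> r m" using lr(2) by (rule strict_mono_imp_increasing)
    then have "1 / (real (r m) + 1) \<le> 1 / (real m + 1)" by (simp add: frac_le)
    moreover have "f ((s \<circ> r) m) < c + 1 / (real (r m) + 1)" using s(2) by simp
    ultimately show False using m by linarith
  qed
  then show ?thesis using lr(1) cle by (meson order_trans)
qed

lemma finite_subseq:
  fixes s :: "nat \<Rightarrow> nat \<Rightarrow> 'a::metric_space"
  assumes "compact C" "\<And>m k. k < K \<Longrightarrow> s m k \<in> C"
  shows "\<exists>r l. strict_mono r \<and> (\<forall>k<K. l k \<in> C \<and> (\<lambda>m. s (r m) k) \<longlonglongrightarrow> l k)"
  using assms(2)
proof (induction K)
  case 0
  show ?case by (rule exI[of _ id]) (auto simp: strict_mono_def)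
next
  case (Suc K)
  have pK: "\<And>m k. k < K \<Longrightarrow> s m k \<in> C" using Suc.prems by simp
  obtain r1 l1 where r1: "strict_mono r1" "\<forall>k<K. l1 k \<in> C \<and> (\<lambda>m. s (r1 m) k) \<longlonglongrightarrow> l1 k"
    using Suc.IH[OF pK] by blast
  have sK: "\<And>m. s (r1 m) K \<in> C" using Suc.prems by simp
  obtain lK r2 where r2: "lK \<in> C" "strict_mono r2" "((\<lambda>m. s (r1 m) K) \<circ> r2) \<longlonglongrightarrow> lK"
    by (rule seq_compactE'[OF assms(1) sK])
  show ?case
  proof (intro exI conjI allI impI)
    show "strict_mono (r1 \<circ> r2)" using r1(1) r2(2) by (rule strict_mono_o)
    fix k assume k: "k < Suc K"
    show "(l1(K := lK)) k \<in> C"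
    proof (cases "k = K")
      case True thus ?thesis using r2(1) by simp
    next
      case False thus ?thesis using r1(2) k by simp
    qed
    show "(\<lambda>m. s ((r1 \<circ> r2) m) k) \<longlonglongrightarrow> (l1(K := lK)) k"
    proof (cases "k = K")
      case True then show ?thesis using r2(3) by (simp add: o_def)
    next
      case False
      then have "(\<lambda>m. s (r1 m) k) \<longlonglongrightarrow> l1 k" using r1(2) k by simp
      from LIMSEQ_subseq_LIMSEQ[OF this r2(2)] show ?thesis using False by (simp add: o_def)
    qed
  qed
qed

lemma sum_pad:
  fixes f :: "'i \<Rightarrow> 'b::comm_monoid_add" and c K :: nat
  assumes "bij_betw h {0..<c} I" "c \<le> K"
  shows "(\<Sum>k<K. if k < c then f (h k) else 0) = sum f I"
proof -
  have "(\<Sum>k<K. if k < c then f (h k) else 0) = (\<Sum>k\<in>{..<K} \<inter> {k. k<c}. f (h k))"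
    by (simp add: sum.If_cases)
  also have "{..<K} \<inter> {k. k<c} = {0..<c}" using assms(2) by auto
  also have "(\<Sum>k\<in>{0..<c}. f (h k)) = sum f I" by (rule sum.reindex_bij_betw[OF assms(1)])
  finally show ?thesis .
qed

lemma affdep_indexed:
  fixes z :: "'i \<Rightarrow> real^'d"
  assumes fin: "finite I" and ge: "CARD('d) + 2 \<le> card I"
  obtains u where "sum u I = 0" "(\<Sum>i\<in>I. u i *\<^sub>R z i) = 0" "\<exists>i\<in>I. u i \<noteq> 0"
proof (cases "inj_on z I")
  case True
  have "affine_dependent (z ` I)"
    by (rule affine_dependent_biggerset) (use fin True ge in \<open>auto simp: card_image\<close>)
  then obtain U where U: "sum U (z`I) = 0" "\<exists>v\<in>z`I. U v \<noteq> 0" "(\<Sum>v\<in>z`I. U v *\<^sub>R v) = 0"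
    using affine_dependent_explicit_finite[of "z ` I"] fin by auto
  have s1: "sum U (z`I) = (\<Sum>i\<in>I. U (z i))" using sum.reindex[OF True, of U] by simp
  have s2: "(\<Sum>v\<in>z`I. U v *\<^sub>R v) = (\<Sum>i\<in>I. U (z i) *\<^sub>R z i)"
    using sum.reindex[OF True, of "\<lambda>v. U v *\<^sub>R v"] by simp
  show ?thesis
    by (rule that[of "\<lambda>i. U (z i)"]) (use U s1 s2 in auto)
next
  case False
  then obtain a b where ab: "a \<in> I" "b \<in> I" "a \<noteq> b" "z a = z b" by (auto simp: inj_on_def)
  define u where "u i = (if i = a then 1 else 0) + (if i = b then -1 else (0::real))" for i
  have "sum u I = 0"
    using ab fin by (simp add: u_def sum.distrib sum.delta)
  moreover have "(\<Sum>i\<in>I. u i *\<^sub>R z i) = 0"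
  proof -
    have "(\<Sum>i\<in>I. u i *\<^sub>R z i) = (\<Sum>i\<in>I. (if i = a then z i else 0) + (if i = b then - z i else 0))"
      by (rule sum.cong) (auto simp: u_def)
    also have "\<dots> = z a - z b" using ab fin by (simp add: sum.distrib sum.delta)
    finally show ?thesis using ab by simp
  qed
  moreover have "u a \<noteq> 0" using ab by (simp add: u_def)
  ultimately show ?thesis using that ab by blast
qed

lemma cara_cost:
  fixes z :: "'i \<Rightarrow> real^'d" and G :: "real^'d \<Rightarrow> real" and \<alpha> :: "'i \<Rightarrow> real"
  assumes "finite I" "\<forall>i\<in>I. 0 \<le> \<alpha> i \<and> z i \<in> X" "sum \<alpha> I = 1"
  shows "\<exists>a zz. (\<forall>k<CARD('d)+1. 0 \<le> a k \<and> zz k \<in> X) \<and> (\<Sum>k<CARD('d)+1. a k) = 1 \<and>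
           (\<Sum>k<CARD('d)+1. a k *\<^sub>R zz k) = (\<Sum>i\<in>I. \<alpha> i *\<^sub>R z i) \<and>
           (\<Sum>k<CARD('d)+1. a k * G (zz k)) \<le> (\<Sum>i\<in>I. \<alpha> i * G (z i))"
  using assms
proof (induction "card I" arbitrary: I \<alpha> rule: less_induct)
  case less
  show ?case
  proof (cases "card I \<le> CARD('d) + 1")
    case True
    obtain h where h: "bij_betw h {0..<card I} I" using ex_bij_betw_nat_finite[OF less.prems(1)] by blast
    have "I \<noteq> {}" using less.prems(3) by auto
    then obtain i0 where i0: "i0 \<in> I" by blast
    define a where "a k = (if k < card I then \<alpha> (h k) else 0)" for k
    define zz where "zz k = (if k < card I then z (h k) else z i0)" for k
    have hk: "h k \<in> I" if "k < card I" for k using h that by (auto simp: bij_betw_def)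
    have P1: "\<forall>k<CARD('d)+1. 0 \<le> a k \<and> zz k \<in> X"
      using hk less.prems(2) i0 by (auto simp: a_def zz_def)
    have "(\<Sum>k<CARD('d)+1. a k) = (\<Sum>k<CARD('d)+1. if k < card I then \<alpha> (h k) else 0)"
      by (simp add: a_def)
    also have "\<dots> = sum \<alpha> I" by (rule sum_pad[OF h True])
    finally have P2: "(\<Sum>k<CARD('d)+1. a k) = 1" using less.prems(3) by simp
    have "(\<Sum>k<CARD('d)+1. a k *\<^sub>R zz k) = (\<Sum>k<CARD('d)+1. if k < card I then \<alpha> (h k) *\<^sub>R z (h k) else 0)"
      by (rule sum.cong) (auto simp: a_def zz_def)
    also have "\<dots> = (\<Sum>i\<in>I. \<alpha> i *\<^sub>R z i)" by (rule sum_pad[OF h True, of "\<lambda>i. \<alpha> i *\<^sub>R z i"])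
    finally have P3: "(\<Sum>k<CARD('d)+1. a k *\<^sub>R zz k) = (\<Sum>i\<in>I. \<alpha> i *\<^sub>R z i)" .
    have "(\<Sum>k<CARD('d)+1. a k * G (zz k)) = (\<Sum>k<CARD('d)+1. if k < card I then \<alpha> (h k) * G (z (h k)) else 0)"
      by (rule sum.cong) (auto simp: a_def zz_def)
    also have "\<dots> = (\<Sum>i\<in>I. \<alpha> i * G (z i))" by (rule sum_pad[OF h True, of "\<lambda>i. \<alpha> i * G (z i)"])
    finally have P4: "(\<Sum>k<CARD('d)+1. a k * G (zz k)) \<le> (\<Sum>i\<in>I. \<alpha> i * G (z i))" by simp
    show ?thesis using P1 P2 P3 P4 by blast
  next
    case False
    then have ge: "CARD('d) + 2 \<le> card I" by simp
    obtain u where u: "sum u I = 0" "(\<Sum>i\<in>I. u i *\<^sub>R z i) = 0" "\<exists>i\<in>I. u i \<noteq> 0"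
      using affdep_indexed[OF less.prems(1) ge] by blast
    define v where "v = (if (\<Sum>i\<in>I. u i * G (z i)) \<ge> 0 then u else (\<lambda>i. - u i))"
    have v1: "sum v I = 0" using u(1) by (simp add: v_def sum_negf)
    have v2: "(\<Sum>i\<in>I. v i *\<^sub>R z i) = 0" using u(2) by (simp add: v_def sum_negf)
    have v3: "\<exists>i\<in>I. v i \<noteq> 0" using u(3) by (simp add: v_def)
    have v4: "(\<Sum>i\<in>I. v i * G (z i)) \<ge> 0" by (simp add: v_def sum_negf)
    define P where "P = {i\<in>I. v i > 0}"
    have finP: "finite P" using less.prems(1) by (simp add: P_def)
    have "P \<noteq> {}"
    proof
      assume "P = {}"
      then have "\<forall>i\<in>I. 0 \<le> - v i" by (auto simp: P_def not_less)
      moreover have "(\<Sum>i\<in>I. - v i) = 0" using v1 by (simp add: sum_negf)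
      ultimately have "\<forall>i\<in>I. - v i = 0" using sum_nonneg_eq_0_iff[OF less.prems(1), of "\<lambda>i. - v i"] by simp
      then show False using v3 by auto
    qed
    define r where "r i = \<alpha> i / v i" for i
    have "Min (r ` P) \<in> r ` P" using finP \<open>P \<noteq> {}\<close> by (intro Min_in) auto
    then obtain j where j: "j \<in> P" "Min (r ` P) = r j" by blast
    have jmin: "r j \<le> r i" if "i \<in> P" for i
    proof -
      have "Min (r ` P) \<le> r i" using finP that by (intro Min_le) auto
      then show ?thesis using j(2) by simp
    qed
    have jI: "j \<in> I" and vj: "v j > 0" using j(1) by (auto simp: P_def)
    define lam where "lam = r j"
    have lam0: "lam \<ge> 0" using vj less.prems(2) jI by (simp add: lam_def r_def)
    define \<beta> where "\<beta> i = \<alpha> i - lam * v i" for i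
    have \<beta>nn: "0 \<le> \<beta> i" if "i \<in> I" for i
    proof (cases "v i > 0")
      case True
      then have "lam \<le> \<alpha> i / v i" using jmin[of i] that by (simp add: P_def lam_def r_def)
      then have "lam * v i \<le> \<alpha> i" using True by (simp add: pos_le_divide_eq)
      then show ?thesis by (simp add: \<beta>_def)
    next
      case False
      then have "lam * v i \<le> 0" using lam0 by (simp add: mult_nonneg_nonpos)
      then show ?thesis using less.prems(2) that by (force simp: \<beta>_def)
    qed
    have \<beta>j: "\<beta> j = 0" using vj by (simp add: \<beta>_def lam_def r_def)
    define I' where "I' = I - {j}"
    have finI': "finite I'" using less.prems(1) by (simp add: I'_def)
    have cardI': "card I' < card I" using jI less.prems(1) by (metis I'_def card_Diff1_less)
    have rem: "sum f I = f j + sum f I'" for f :: "'i \<Rightarrow> 'z::comm_monoid_add"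
      unfolding I'_def using sum.remove[OF less.prems(1) jI] .
    have s1: "sum \<beta> I' = 1"
    proof -
      have "sum \<beta> I = sum \<alpha> I - lam * sum v I"
        by (simp add: \<beta>_def sum_subtractf sum_distrib_left)
      then show ?thesis using rem[of \<beta>] \<beta>j v1 less.prems(3) by simp
    qed
    have s2: "(\<Sum>i\<in>I'. \<beta> i *\<^sub>R z i) = (\<Sum>i\<in>I. \<alpha> i *\<^sub>R z i)"
    proof -
      have "(\<Sum>i\<in>I. \<beta> i *\<^sub>R z i) = (\<Sum>i\<in>I. \<alpha> i *\<^sub>R z i) - lam *\<^sub>R (\<Sum>i\<in>I. v i *\<^sub>R z i)"
        by (simp add: \<beta>_def scaleR_diff_left sum_subtractf scaleR_sum_right)
      then show ?thesis using rem[of "\<lambda>i. \<beta> i *\<^sub>R z i"] \<beta>j v2 by simp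
    qed
    have s3: "(\<Sum>i\<in>I'. \<beta> i * G (z i)) \<le> (\<Sum>i\<in>I. \<alpha> i * G (z i))"
    proof -
      have "(\<Sum>i\<in>I. \<beta> i * G (z i)) = (\<Sum>i\<in>I. \<alpha> i * G (z i)) - lam * (\<Sum>i\<in>I. v i * G (z i))"
        by (simp add: \<beta>_def left_diff_distrib sum_subtractf sum_distrib_left mult.assoc)
      moreover have "lam * (\<Sum>i\<in>I. v i * G (z i)) \<ge> 0" using lam0 v4 by simp
      ultimately show ?thesis using rem[of "\<lambda>i. \<beta> i * G (z i)"] \<beta>j by simp
    qed
    have prem2: "\<forall>i\<in>I'. 0 \<le> \<beta> i \<and> z i \<in> X" using \<beta>nn less.prems(2) by (auto simp: I'_def)
    from less.hyps[OF cardI' finI' prem2 s1] obtain a zz where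
      az: "(\<forall>k<CARD('d)+1. 0 \<le> a k \<and> zz k \<in> X)" "(\<Sum>k<CARD('d)+1. a k) = 1"
        "(\<Sum>k<CARD('d)+1. a k *\<^sub>R zz k) = (\<Sum>i\<in>I'. \<beta> i *\<^sub>R z i)"
        "(\<Sum>k<CARD('d)+1. a k * G (zz k)) \<le> (\<Sum>i\<in>I'. \<beta> i * G (z i))"
      by blast
    show ?thesis using az s2 s3 by (intro exI[of _ a] exI[of _ zz]) auto
  qed
qed

definition reps :: "(real^'d) set \<Rightarrow> real^'d \<Rightarrow> ((nat \<Rightarrow> real) \<times> (nat \<Rightarrow> real^'d)) set" where
  "reps X y = {(a, zz). (\<forall>k<CARD('d)+1. 0 \<le> a k \<and> zz k \<in> X) \<and> (\<Sum>k<CARD('d)+1. a k) = 1 \<and>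
                   y = (\<Sum>k<CARD('d)+1. a k *\<^sub>R zz k)}"

definition costF :: "(real^'d \<Rightarrow> real) \<Rightarrow> (nat \<Rightarrow> real) \<times> (nat \<Rightarrow> real^'d) \<Rightarrow> real" where
  "costF G r = (\<Sum>k<CARD('d)+1. fst r k * G (snd r k))"

definition Cv :: "(real^'d) set \<Rightarrow> (real^'d \<Rightarrow> real) \<Rightarrow> real^'d \<Rightarrow> real" where
  "Cv X G y = Inf (costF G ` reps X y)"

lemma reps_nonempty:
  fixes X :: "(real^'d) set"
  assumes "y \<in> convex hull X"
  shows "reps X y \<noteq> {}"
proof -
  obtain S u where S: "finite S" "S \<subseteq> X" "\<forall>x\<in>S. 0 \<le> u x" "sum u S = 1" "(\<Sum>v\<in>S. u v *\<^sub>R v) = y"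
    using assms unfolding convex_hull_explicit by blast
  have "\<forall>i\<in>S. 0 \<le> u i \<and> id i \<in> X" using S by auto
  from cara_cost[OF S(1) this S(4), of "\<lambda>_. 0"] obtain a zz where
    "(\<forall>k<CARD('d)+1. 0 \<le> a k \<and> zz k \<in> X)" "(\<Sum>k<CARD('d)+1. a k) = 1"
    "(\<Sum>k<CARD('d)+1. a k *\<^sub>R zz k) = (\<Sum>i\<in>S. u i *\<^sub>R id i)" by blast
  then have "(a, zz) \<in> reps X y" using S(5) by (simp add: reps_def)
  then show ?thesis by blast
qed

lemma reps_le1:
  fixes X :: "(real^'d) set"
  assumes "(a, zz) \<in> reps X y" "k < CARD('d)+1"
  shows "a k \<le> 1"
proof -
  have "a k \<le> (\<Sum>k<CARD('d)+1. a k)"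
    by (rule member_le_sum) (use assms in \<open>auto simp: reps_def\<close>)
  then show ?thesis using assms by (simp add: reps_def)
qed

lemma costF_lb:
  fixes X :: "(real^'d) set"
  assumes "r \<in> reps X y" "\<And>x. x \<in> X \<Longrightarrow> L \<le> G x"
  shows "L \<le> costF G r"
proof -
  obtain a zz where r: "r = (a, zz)" by (cases r)
  have "L = (\<Sum>k<CARD('d)+1. a k * L)" using assms(1) r by (simp add: reps_def sum_distrib_right[symmetric])
  also have "\<dots> \<le> (\<Sum>k<CARD('d)+1. a k * G (zz k))"
    by (rule sum_mono) (use assms r in \<open>auto simp: reps_def intro!: mult_left_mono\<close>)
  finally show ?thesis by (simp add: costF_def r)
qed

lemma reps_seq:
  fixes X :: "(real^'d) set" and ys :: "nat \<Rightarrow> real^'d"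
  assumes X: "compact X" and G: "seq_lsc X G"
    and ys: "ys \<longlonglongrightarrow> y" and rs: "\<And>m. rs m \<in> reps X (ys m)"
  shows "\<exists>\<sigma> r. strict_mono \<sigma> \<and> r \<in> reps X y \<and>
            (\<forall>t. t < costF G r \<longrightarrow> (\<forall>\<^sub>F m in sequentially. t < costF G (rs (\<sigma> m))))"
proof -
  let ?K = "CARD('d)+1"
  define s where "s m k = (fst (rs m) k, snd (rs m) k)" for m k
  have sC: "s m k \<in> {0..1} \<times> X" if "k < ?K" for m k
  proof -
    obtain a zz where r: "rs m = (a, zz)" by (cases "rs m")
    have "(a, zz) \<in> reps X (ys m)" using rs r by metis
    then show ?thesis using that reps_le1[of a zz X "ys m" k] by (auto simp: s_def r reps_def)
  qed
  have C: "compact ({0..1::real} \<times> X)" using X by (simp add: compact_Times)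
  obtain \<sigma> l where \<sigma>: "strict_mono \<sigma>" and l: "\<forall>k<?K. l k \<in> {0..1} \<times> X \<and> (\<lambda>m. s (\<sigma> m) k) \<longlonglongrightarrow> l k"
  proof -
    have "\<exists>\<sigma> l. strict_mono \<sigma> \<and> (\<forall>k<?K. l k \<in> {0..1} \<times> X \<and> (\<lambda>m. s (\<sigma> m) k) \<longlonglongrightarrow> l k)"
      by (rule finite_subseq[OF C]) (rule sC)
    then show ?thesis using that by blast
  qed
  define a where "a k = fst (l k)" for k
  define zz where "zz k = snd (l k)" for k
  have la: "(\<lambda>m. fst (rs (\<sigma> m)) k) \<longlonglongrightarrow> a k" if "k < ?K" for k
    using tendsto_fst[OF conjunct2[OF l[rule_format, OF that]]] by (simp add: s_def a_def)
  have lz: "(\<lambda>m. snd (rs (\<sigma> m)) k) \<longlonglongrightarrow> zz k" if "k < ?K" for k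
    using tendsto_snd[OF conjunct2[OF l[rule_format, OF that]]] by (simp add: s_def zz_def)
  have rsm: "\<forall>k<?K. 0 \<le> fst (rs m) k \<and> snd (rs m) k \<in> X" "(\<Sum>k<?K. fst (rs m) k) = 1"
    "ys m = (\<Sum>k<?K. fst (rs m) k *\<^sub>R snd (rs m) k)" for m
    using rs[of m] by (auto simp: reps_def split: prod.splits)
  have a_nn: "\<forall>k<?K. 0 \<le> a k \<and> zz k \<in> X" using l by (auto simp: a_def zz_def)
  have "(\<lambda>m. \<Sum>k<?K. fst (rs (\<sigma> m)) k) \<longlonglongrightarrow> (\<Sum>k<?K. a k)"
    by (rule tendsto_sum) (use la in auto)
  then have a1: "(\<Sum>k<?K. a k) = 1" using rsm(2) by (simp add: LIMSEQ_const_iff)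
  have l1: "(\<lambda>m. \<Sum>k<?K. fst (rs (\<sigma> m)) k *\<^sub>R snd (rs (\<sigma> m)) k) \<longlonglongrightarrow> (\<Sum>k<?K. a k *\<^sub>R zz k)"
    by (rule tendsto_sum) (use la lz in \<open>auto intro!: tendsto_scaleR\<close>)
  have eqf: "(\<lambda>m. \<Sum>k<?K. fst (rs (\<sigma> m)) k *\<^sub>R snd (rs (\<sigma> m)) k) = (\<lambda>m. ys (\<sigma> m))"
    by (simp add: rsm(3))
  have l2: "(\<lambda>m. ys (\<sigma> m)) \<longlonglongrightarrow> y" using LIMSEQ_subseq_LIMSEQ[OF ys \<sigma>] by (simp add: o_def)
  have ay: "y = (\<Sum>k<?K. a k *\<^sub>R zz k)" using LIMSEQ_unique[OF l2 l1[unfolded eqf]] .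
  have rr: "(a, zz) \<in> reps X y" using a_nn a1 ay by (simp add: reps_def)
  have lsc: "\<forall>\<^sub>F m in sequentially. t < costF G (rs (\<sigma> m))" if t: "t < costF G (a, zz)" for t
  proof -
    define e where "e = costF G (a, zz) - t"
    have e: "e > 0" using t by (simp add: e_def)
    have ev0: "\<forall>k\<in>{..<?K}. \<forall>\<^sub>F m in sequentially. G (zz k) - e/2 < G (snd (rs (\<sigma> m)) k)"
    proof
      fix k assume k: "k \<in> {..<?K}"
      show "\<forall>\<^sub>F m in sequentially. G (zz k) - e/2 < G (snd (rs (\<sigma> m)) k)"
        by (rule seq_lscD[OF G _ _ lz]) (use rsm a_nn k e in auto)
    qed
    have ev1: "\<forall>\<^sub>F m in sequentially. \<forall>k\<in>{..<?K}. G (zz k) - e/2 < G (snd (rs (\<sigma> m)) k)"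
      using eventually_ball_finite[OF finite_lessThan ev0] .
    have "(\<lambda>m. \<Sum>k<?K. fst (rs (\<sigma> m)) k * G (zz k)) \<longlonglongrightarrow> (\<Sum>k<?K. a k * G (zz k))"
      by (rule tendsto_sum) (use la in \<open>auto intro!: tendsto_mult\<close>)
    then have ev2: "\<forall>\<^sub>F m in sequentially. costF G (a, zz) - e/2 < (\<Sum>k<?K. fst (rs (\<sigma> m)) k * G (zz k))"
      using e by (intro order_tendstoD(1)) (auto simp: costF_def)
    show ?thesis
      using ev1 ev2
    proof eventually_elim
      case (elim m)
      have "(\<Sum>k<?K. fst (rs (\<sigma> m)) k * G (zz k)) - e/2
          = (\<Sum>k<?K. fst (rs (\<sigma> m)) k * (G (zz k) - e/2))"
      proof -
        have "(\<Sum>k<?K. fst (rs (\<sigma> m)) k * (G (zz k) - e/2))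
            = (\<Sum>k<?K. fst (rs (\<sigma> m)) k * G (zz k)) - (\<Sum>k<?K. fst (rs (\<sigma> m)) k) * (e/2)"
          by (simp only: right_diff_distrib sum_subtractf sum_distrib_right)
        then show ?thesis using rsm(2)[of "\<sigma> m"] by simp
      qed
      also have "\<dots> \<le> (\<Sum>k<?K. fst (rs (\<sigma> m)) k * G (snd (rs (\<sigma> m)) k))"
      proof (rule sum_mono)
        fix k assume k: "k \<in> {..<?K}"
        have "G (zz k) - e/2 \<le> G (snd (rs (\<sigma> m)) k)" using elim(1) k by (simp add: less_imp_le)
        moreover have "0 \<le> fst (rs (\<sigma> m)) k" using rsm(1)[of "\<sigma> m"] k by simp
        ultimately show "fst (rs (\<sigma> m)) k * (G (zz k) - e/2) \<le> fst (rs (\<sigma> m)) k * G (snd (rs (\<sigma> m)) k)"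
          by (rule mult_left_mono)
      qed
      finally have fin: "(\<Sum>k<?K. fst (rs (\<sigma> m)) k * G (zz k)) - e/2
          \<le> (\<Sum>k<?K. fst (rs (\<sigma> m)) k * G (snd (rs (\<sigma> m)) k))" .
      have "t = costF G (a, zz) - e" by (simp add: e_def)
      moreover have "costF G (rs (\<sigma> m)) = (\<Sum>k<?K. fst (rs (\<sigma> m)) k * G (snd (rs (\<sigma> m)) k))"
        by (simp add: costF_def)
      ultimately show ?case using fin elim(2) by linarith
    qed
  qed
  show ?thesis using \<sigma> rr lsc by blast
qed

lemma lsc_lb:
  fixes X :: "'a::metric_space set"
  assumes "compact X" "X \<noteq> {}" "seq_lsc X G"
  obtains L where "\<And>x. x \<in> X \<Longrightarrow> L \<le> G x"
  using seq_lsc_min[OF assms] by blast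

lemma Cv_bdd:
  fixes X :: "(real^'d) set"
  assumes "compact X" "X \<noteq> {}" "seq_lsc X G"
  shows "bdd_below (costF G ` reps X y)"
proof -
  obtain L where L: "\<And>x. x \<in> X \<Longrightarrow> L \<le> G x" using lsc_lb[OF assms] by blast
  have "L \<le> costF G r" if "r \<in> reps X y" for r by (rule costF_lb[OF that L])
  then show ?thesis unfolding bdd_below_def by blast
qed

lemma Cv_le:
  fixes X :: "(real^'d) set"
  assumes "compact X" "X \<noteq> {}" "seq_lsc X G" "r \<in> reps X y"
  shows "Cv X G y \<le> costF G r"
  unfolding Cv_def by (rule cInf_lower[OF imageI[OF assms(4)] Cv_bdd[OF assms(1-3)]])

lemma Cv_attained:
  fixes X :: "(real^'d) set"
  assumes X: "compact X" "X \<noteq> {}" and G: "seq_lsc X G" and y: "y \<in> convex hull X"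
  shows "\<exists>r\<in>reps X y. costF G r = Cv X G y"
proof -
  have bb: "bdd_below (costF G ` reps X y)" by (rule Cv_bdd[OF X G])
  have ne: "reps X y \<noteq> {}" by (rule reps_nonempty[OF y])
  define c where "c = Cv X G y"
  have "\<forall>m::nat. \<exists>r\<in>reps X y. costF G r < c + 1 / (real m + 1)"
  proof
    fix m :: nat
    have "Inf (costF G ` reps X y) < c + 1 / (real m + 1)" unfolding c_def Cv_def by simp
    then show "\<exists>r\<in>reps X y. costF G r < c + 1 / (real m + 1)"
      using ne by (simp add: cInf_less_iff[OF _ bb])
  qed
  then obtain rs where rs: "\<And>m. rs m \<in> reps X y" "\<And>m. costF G (rs m) < c + 1 / (real m + 1)" by metis
  have "\<exists>\<sigma> r. strict_mono \<sigma> \<and> r \<in> reps X y \<and>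
            (\<forall>t. t < costF G r \<longrightarrow> (\<forall>\<^sub>F m in sequentially. t < costF G (rs (\<sigma> m))))"
    by (rule reps_seq[OF X(1) G tendsto_const]) (rule rs(1))
  then obtain \<sigma> r where \<sigma>: "strict_mono \<sigma>" and r: "r \<in> reps X y"
    and lsc: "\<And>t. t < costF G r \<Longrightarrow> \<forall>\<^sub>F m in sequentially. t < costF G (rs (\<sigma> m))" by blast
  have "costF G r \<le> c"
  proof (rule ccontr)
    assume "\<not> ?thesis"
    then have d: "costF G r - c > 0" by simp
    have e1: "\<forall>\<^sub>F m in sequentially. c + (costF G r - c) / 2 < costF G (rs (\<sigma> m))"
      by (rule lsc) (use d in \<open>simp add: field_simps\<close>)
    have e2: "\<forall>\<^sub>F m in sequentially. 1 / (real m + 1) < (costF G r - c) / 2"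
    proof -
      have "(\<lambda>m. inverse (real (Suc m))) \<longlonglongrightarrow> 0" by (rule LIMSEQ_inverse_real_of_nat)
      then have "\<forall>\<^sub>F m in sequentially. inverse (real (Suc m)) < (costF G r - c) / 2"
        using d by (intro order_tendstoD(2)) auto
      then show ?thesis by eventually_elim (simp add: inverse_eq_divide add.commute)
    qed
    obtain m where m: "c + (costF G r - c) / 2 < costF G (rs (\<sigma> m))" "1 / (real m + 1) < (costF G r - c) / 2"
      by (rule ev_both[OF e1 e2])
    have "m \<le> \<sigma> m" using \<sigma> by (rule strict_mono_imp_increasing)
    then have "1 / (real (\<sigma> m) + 1) \<le> 1 / (real m + 1)" by (simp add: frac_le)
    moreover have "costF G (rs (\<sigma> m)) < c + 1 / (real (\<sigma> m) + 1)" using rs(2) by simp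
    ultimately show False using m by linarith
  qed
  moreover have "c \<le> costF G r" unfolding c_def by (rule Cv_le[OF X G r])
  ultimately show ?thesis using r unfolding c_def by (intro bexI[of _ r]) auto
qed

lemma Cv_lb:
  fixes X :: "(real^'d) set"
  assumes X: "compact X" "X \<noteq> {}" and G: "seq_lsc X G" and y: "y \<in> convex hull X"
    and L: "\<And>x. x \<in> X \<Longrightarrow> L \<le> G x"
  shows "L \<le> Cv X G y"
proof -
  obtain r where r: "r \<in> reps X y" "costF G r = Cv X G y" using Cv_attained[OF X G y] by blast
  have "L \<le> costF G r" by (rule costF_lb[OF r(1) L])
  then show ?thesis using r(2) by simp
qed

lemma Cv_lsc:
  fixes X :: "(real^'d) set"
  assumes X: "compact X" "X \<noteq> {}" and G: "seq_lsc X G"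
  shows "seq_lsc (convex hull X) (Cv X G)"
  unfolding seq_lsc_def
proof (intro allI impI, elim conjE)
  fix s z t
  assume s: "\<forall>m. s m \<in> convex hull X" and z: "z \<in> convex hull X" and lim: "s \<longlonglongrightarrow> z"
    and t: "t < Cv X G z"
  show "\<forall>\<^sub>F m in sequentially. t < Cv X G (s m)"
  proof (rule ccontr)
    assume "\<not> ?thesis"
    then obtain \<sigma>0 :: "nat \<Rightarrow> nat" where \<sigma>0: "strict_mono \<sigma>0" "\<And>n. \<not> t < Cv X G (s (\<sigma>0 n))"
      using not_eventually_sequentiallyD by blast
    have "\<forall>n. \<exists>r\<in>reps X (s (\<sigma>0 n)). costF G r = Cv X G (s (\<sigma>0 n))"
      using Cv_attained[OF X G] s by blast
    then obtain rs where rs: "\<And>n. rs n \<in> reps X (s (\<sigma>0 n))" "\<And>n. costF G (rs n) = Cv X G (s (\<sigma>0 n))"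
      by metis
    have lim0: "(\<lambda>n. s (\<sigma>0 n)) \<longlonglongrightarrow> z" using LIMSEQ_subseq_LIMSEQ[OF lim \<sigma>0(1)] by (simp add: o_def)
    have "\<exists>\<sigma> r. strict_mono \<sigma> \<and> r \<in> reps X z \<and>
            (\<forall>t. t < costF G r \<longrightarrow> (\<forall>\<^sub>F m in sequentially. t < costF G (rs (\<sigma> m))))"
      by (rule reps_seq[OF X(1) G lim0]) (rule rs(1))
    then obtain \<sigma> r where r: "r \<in> reps X z"
      and lsc: "\<And>t. t < costF G r \<Longrightarrow> \<forall>\<^sub>F m in sequentially. t < costF G (rs (\<sigma> m))" by blast
    have "t < costF G r" using t Cv_le[OF X G r] by linarith
    then have "\<forall>\<^sub>F m in sequentially. t < costF G (rs (\<sigma> m))" by (rule lsc)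
    then obtain m where "t < costF G (rs (\<sigma> m))" using eventually_sequentially by auto
    then show False using rs(2) \<sigma>0(2) by metis
  qed
qed

lemma Cv_convex:
  fixes X :: "(real^'d) set"
  assumes X: "compact X" "X \<noteq> {}" and G: "seq_lsc X G"
    and y1: "y1 \<in> convex hull X" and y2: "y2 \<in> convex hull X" and mu: "0 \<le> \<mu>" "\<mu> \<le> 1"
  shows "Cv X G (\<mu> *\<^sub>R y1 + (1 - \<mu>) *\<^sub>R y2) \<le> \<mu> * Cv X G y1 + (1 - \<mu>) * Cv X G y2"
proof -
  let ?K = "CARD('d)+1"
  obtain a1 z1 where r1: "(a1, z1) \<in> reps X y1" "costF G (a1, z1) = Cv X G y1"
    using Cv_attained[OF X G y1] by auto
  obtain a2 z2 where r2: "(a2, z2) \<in> reps X y2" "costF G (a2, z2) = Cv X G y2"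
    using Cv_attained[OF X G y2] by auto
  define I where "I = {..<?K} <+> {..<?K}"
  define \<alpha> where "\<alpha> = case_sum (\<lambda>k. \<mu> * a1 k) (\<lambda>k. (1 - \<mu>) * a2 k)"
  define z where "z = case_sum z1 z2"
  have finI: "finite I" by (simp add: I_def)
  have p1: "\<forall>i\<in>I. 0 \<le> \<alpha> i \<and> z i \<in> X"
    using r1(1) r2(1) mu by (auto simp: I_def \<alpha>_def z_def reps_def)
  have sa1: "sum a1 {..<?K} = 1" and sa2: "sum a2 {..<?K} = 1"
    and y1e: "y1 = (\<Sum>k<?K. a1 k *\<^sub>R z1 k)" and y2e: "y2 = (\<Sum>k<?K. a2 k *\<^sub>R z2 k)"
    using r1(1) r2(1) by (auto simp: reps_def)
  have SP: "sum f I = sum (\<lambda>k. f (Inl k)) {..<?K} + sum (\<lambda>k. f (Inr k)) {..<?K}" for f :: "nat + nat \<Rightarrow> 'z::comm_monoid_add"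
    unfolding I_def by (simp only: sum.Plus[OF finite_lessThan finite_lessThan] o_def)
  have "sum \<alpha> I = \<mu> * sum a1 {..<?K} + (1 - \<mu>) * sum a2 {..<?K}"
    by (simp only: SP \<alpha>_def sum.case sum_distrib_left)
  then have p2: "sum \<alpha> I = 1" using sa1 sa2 by simp
  have p3: "(\<Sum>i\<in>I. \<alpha> i *\<^sub>R z i) = \<mu> *\<^sub>R y1 + (1 - \<mu>) *\<^sub>R y2"
    unfolding y1e y2e
    by (simp only: SP \<alpha>_def z_def sum.case scaleR_scaleR[symmetric] scaleR_sum_right)
  have p4: "(\<Sum>i\<in>I. \<alpha> i * G (z i)) = \<mu> * Cv X G y1 + (1 - \<mu>) * Cv X G y2"
    unfolding r1(2)[symmetric] r2(2)[symmetric]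
    by (simp only: SP \<alpha>_def z_def sum.case costF_def fst_conv snd_conv sum_distrib_left mult.assoc)
  from cara_cost[OF finI p1 p2, of G] obtain a zz where
    az: "(\<forall>k<?K. 0 \<le> a k \<and> zz k \<in> X)" "(\<Sum>k<?K. a k) = 1"
      "(\<Sum>k<?K. a k *\<^sub>R zz k) = (\<Sum>i\<in>I. \<alpha> i *\<^sub>R z i)"
      "(\<Sum>k<?K. a k * G (zz k)) \<le> (\<Sum>i\<in>I. \<alpha> i * G (z i))" by blast
  have "(a, zz) \<in> reps X (\<mu> *\<^sub>R y1 + (1 - \<mu>) *\<^sub>R y2)"
    using az(1-3) p3 by (simp add: reps_def)
  then have "Cv X G (\<mu> *\<^sub>R y1 + (1 - \<mu>) *\<^sub>R y2) \<le> costF G (a, zz)" by (rule Cv_le[OF X G])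
  also have "\<dots> \<le> \<mu> * Cv X G y1 + (1 - \<mu>) * Cv X G y2" using az(4) p4 by (simp add: costF_def)
  finally show ?thesis .
qed

lemma costF_close:
  fixes X :: "(real^'d) set"
  assumes r: "r \<in> reps X y" and e: "\<And>x. x \<in> X \<Longrightarrow> G1 x \<le> G2 x + e"
  shows "costF G1 r \<le> costF G2 r + e"
proof -
  obtain a zz where rr: "r = (a, zz)" by (cases r)
  have P: "\<forall>k<CARD('d)+1. 0 \<le> a k \<and> zz k \<in> X" "(\<Sum>k<CARD('d)+1. a k) = 1"
    using r rr by (auto simp: reps_def)
  have "(\<Sum>k<CARD('d)+1. a k * G1 (zz k)) \<le> (\<Sum>k<CARD('d)+1. a k * (G2 (zz k) + e))"
    by (rule sum_mono) (use P e in \<open>auto intro!: mult_left_mono\<close>)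
  also have "\<dots> = (\<Sum>k<CARD('d)+1. a k * G2 (zz k)) + (\<Sum>k<CARD('d)+1. a k) * e"
    by (simp only: distrib_left sum.distrib sum_distrib_right)
  finally show ?thesis using P(2) by (simp add: costF_def rr)
qed

lemma Cv_close:
  fixes X :: "(real^'d) set"
  assumes X: "compact X" "X \<noteq> {}" and G1: "seq_lsc X G1" and G2: "seq_lsc X G2"
    and y: "y \<in> convex hull X" and e: "\<And>x. x \<in> X \<Longrightarrow> \<bar>G1 x - G2 x\<bar> \<le> e"
  shows "Cv X G1 y \<le> Cv X G2 y + e"
proof -
  obtain r where r: "r \<in> reps X y" "costF G2 r = Cv X G2 y" using Cv_attained[OF X G2 y] by blast
  have "Cv X G1 y \<le> costF G1 r" by (rule Cv_le[OF X G1 r(1)])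
  also have "\<dots> \<le> costF G2 r + e" by (rule costF_close[OF r(1)]) (use e in \<open>force simp: abs_le_iff\<close>)
  finally show ?thesis using r(2) by simp
qed

lemma lsc_add_cont:
  fixes S :: "'a::metric_space set"
  assumes f: "seq_lsc S f" and g: "continuous_on S g"
  shows "seq_lsc S (\<lambda>x. f x + g x)"
  unfolding seq_lsc_def
proof (intro allI impI, elim conjE)
  fix s z t assume s: "\<forall>m. s m \<in> S" and z: "z \<in> S" and lim: "s \<longlonglongrightarrow> z" and t: "t < f z + g z"
  define e where "e = f z + g z - t"
  have e: "e > 0" using t by (simp add: e_def)
  have ev1: "\<forall>\<^sub>F m in sequentially. f z - e/2 < f (s m)"
    by (rule seq_lscD[OF f _ z lim]) (use s e in auto)
  have "(\<lambda>m. g (s m)) \<longlonglongrightarrow> g z"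
    using g z s lim unfolding continuous_on_sequentially by (auto simp: o_def)
  then have ev2: "\<forall>\<^sub>F m in sequentially. g z - e/2 < g (s m)"
    using e by (intro order_tendstoD(1)) auto
  show "\<forall>\<^sub>F m in sequentially. t < f (s m) + g (s m)"
    using ev1 ev2
  proof eventually_elim
    case (elim m)
    have "t = f z + g z - e" by (simp add: e_def)
    then show ?case using elim by linarith
  qed
qed

lemma compact_unique_limit:
  fixes y :: "nat \<Rightarrow> 'a::metric_space"
  assumes K: "compact K" and yK: "\<And>m. y m \<in> K"
    and uniq: "\<And>\<sigma> l. strict_mono \<sigma> \<Longrightarrow> (\<lambda>m. y (\<sigma> m)) \<longlonglongrightarrow> l \<Longrightarrow> l = ys"
  shows "y \<longlonglongrightarrow> ys"
proof (rule ccontr)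
  assume "\<not> y \<longlonglongrightarrow> ys"
  then obtain e where e: "e > 0" "\<not> (\<forall>\<^sub>F m in sequentially. dist (y m) ys < e)"
    unfolding tendsto_iff by blast
  then obtain \<sigma>1 :: "nat \<Rightarrow> nat" where \<sigma>1: "strict_mono \<sigma>1" "\<And>n. \<not> dist (y (\<sigma>1 n)) ys < e"
    using not_eventually_sequentiallyD by blast
  obtain l \<sigma>2 where l: "l \<in> K" "strict_mono \<sigma>2" "((\<lambda>n. y (\<sigma>1 n)) \<circ> \<sigma>2) \<longlonglongrightarrow> l"
    by (rule seq_compactE'[OF K, of "\<lambda>n. y (\<sigma>1 n)"]) (use yK in auto)
  have "strict_mono (\<sigma>1 \<circ> \<sigma>2)" using \<sigma>1(1) l(2) by (rule strict_mono_o)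
  moreover have "(\<lambda>m. y ((\<sigma>1 \<circ> \<sigma>2) m)) \<longlonglongrightarrow> l" using l(3) by (simp add: o_def)
  ultimately have "l = ys" by (rule uniq)
  then have "\<forall>\<^sub>F m in sequentially. dist (y (\<sigma>1 (\<sigma>2 m))) ys < e"
    using l(3) e(1) unfolding tendsto_iff by (simp add: o_def)
  then obtain m where "dist (y (\<sigma>1 (\<sigma>2 m))) ys < e" using eventually_sequentially by auto
  then show False using \<sigma>1(2) by blast
qed

lemma mid_norm:
  fixes y1 y2 v :: "'a::real_inner"
  shows "(norm ((1/2) *\<^sub>R y1 + (1/2) *\<^sub>R y2 - v))^2
       = ((norm (y1 - v))^2 + (norm (y2 - v))^2) / 2 - (norm (y1 - y2))^2 / 4"
  by (simp add: power2_norm_eq_inner inner_simps inner_commute algebra_simps) (simp add: field_simps)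

locale proxsetup =
  fixes X :: "(real^'d) set" and W :: "'w::real_normed_vector set"
    and G :: "'w \<Rightarrow> real^'d \<Rightarrow> real" and Hc \<gamma> :: real
  assumes X: "compact X" "X \<noteq> {}"
    and lsc: "\<And>w. w \<in> W \<Longrightarrow> seq_lsc X (G w)"
    and hold: "\<And>w w' x. w \<in> W \<Longrightarrow> w' \<in> W \<Longrightarrow> x \<in> X \<Longrightarrow> \<bar>G w' x - G w x\<bar> \<le> Hc * norm (w' - w) powr \<gamma>"
    and gam: "\<gamma> > 0"
begin

definition psi where "psi v w y = Cv X (G w) y + (norm (y - v))^2"

definition prox where
  "prox v w = (SOME y. y \<in> convex hull X \<and> (\<forall>y'\<in>convex hull X. psi v w y \<le> psi v w y'))"

lemma H: "compact (convex hull X)" "convex hull X \<noteq> {}"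
  using X by (auto simp: compact_convex_hull)

lemma psi_lsc: "w \<in> W \<Longrightarrow> seq_lsc (convex hull X) (psi v w)"
  unfolding psi_def
  by (rule lsc_add_cont[OF Cv_lsc[OF X lsc]]) (auto intro!: continuous_intros)

lemma prox_spec:
  assumes "w \<in> W"
  shows "prox v w \<in> convex hull X \<and> (\<forall>y'\<in>convex hull X. psi v w (prox v w) \<le> psi v w y')"
proof -
  have "\<exists>y\<in>convex hull X. \<forall>y'\<in>convex hull X. psi v w y \<le> psi v w y'"
    by (rule seq_lsc_min[OF H psi_lsc[OF assms]])
  then have "\<exists>y. y \<in> convex hull X \<and> (\<forall>y'\<in>convex hull X. psi v w y \<le> psi v w y')" by blast
  then show ?thesis unfolding prox_def by (rule someI_ex)
qed

lemma prox_unique: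
  assumes w: "w \<in> W" and y1: "y1 \<in> convex hull X" and y2: "y2 \<in> convex hull X"
    and m1: "\<forall>y'\<in>convex hull X. psi v w y1 \<le> psi v w y'"
    and m2: "\<forall>y'\<in>convex hull X. psi v w y2 \<le> psi v w y'"
  shows "y1 = y2"
proof (rule ccontr)
  assume ne: "y1 \<noteq> y2"
  define mid where "mid = (1/2) *\<^sub>R y1 + (1/2) *\<^sub>R y2"
  have midH: "mid \<in> convex hull X"
    unfolding mid_def by (rule convexD[OF convex_convex_hull y1 y2]) auto
  have c: "Cv X (G w) ((1/2) *\<^sub>R y1 + (1 - 1/2) *\<^sub>R y2) \<le> (1/2) * Cv X (G w) y1 + (1 - 1/2) * Cv X (G w) y2"
    by (rule Cv_convex[OF X lsc[OF w] y1 y2]) auto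
  then have c': "Cv X (G w) mid \<le> (Cv X (G w) y1 + Cv X (G w) y2) / 2"
    by (simp add: mid_def)
  have n: "(norm (mid - v))^2 = ((norm (y1 - v))^2 + (norm (y2 - v))^2) / 2 - (norm (y1 - y2))^2 / 4"
    unfolding mid_def by (rule mid_norm)
  have pos: "(norm (y1 - y2))^2 > 0" using ne by simp
  have "psi v w mid < (psi v w y1 + psi v w y2) / 2"
    using c' n pos unfolding psi_def by argo
  moreover have "psi v w y1 \<le> psi v w y2" "psi v w y2 \<le> psi v w y1" using m1 m2 y1 y2 by auto
  moreover have "psi v w y1 \<le> psi v w mid" using m1 midH by auto
  ultimately show False by argo
qed

lemma prox_fixed:
  assumes w: "w \<in> W" and v: "v \<in> convex hull X" and fx: "prox v w = v"
  shows "\<forall>y\<in>convex hull X. Cv X (G w) v \<le> Cv X (G w) y"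
proof
  fix y assume y: "y \<in> convex hull X"
  show "Cv X (G w) v \<le> Cv X (G w) y"
  proof (rule ccontr)
    assume "\<not> ?thesis"
    then have D: "Cv X (G w) v - Cv X (G w) y > 0" by simp
    define D' where "D' = Cv X (G w) v - Cv X (G w) y"
    have yv: "y \<noteq> v" using D by auto
    define d where "d = (norm (y - v))^2"
    have d: "d > 0" using yv by (simp add: d_def)
    define s where "s = min 1 (D' / (2 * d))"
    have s0: "0 < s" using D d by (simp add: s_def D'_def)
    have s1: "s \<le> 1" by (simp add: s_def)
    have sd: "s * d \<le> D' / 2" using d by (simp add: s_def min_def field_simps split: if_splits)
    define ys where "ys = s *\<^sub>R y + (1 - s) *\<^sub>R v"
    have ysH: "ys \<in> convex hull X"
      unfolding ys_def by (rule convexD[OF convex_convex_hull y v]) (use s0 s1 in auto)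
    have cv: "Cv X (G w) ys \<le> s * Cv X (G w) y + (1 - s) * Cv X (G w) v"
      unfolding ys_def by (rule Cv_convex[OF X lsc[OF w] y v]) (use s0 s1 in auto)
    have "ys - v = s *\<^sub>R (y - v)" by (simp add: ys_def algebra_simps)
    then have nys: "(norm (ys - v))^2 = s^2 * d" by (simp add: d_def power_mult_distrib)
    have "s^2 * d \<le> s * (D' / 2)" using sd s0 by (simp add: power2_eq_square mult.assoc mult_left_mono)
    moreover have "s * Cv X (G w) y + (1 - s) * Cv X (G w) v = Cv X (G w) v - s * D'"
      by (simp add: D'_def algebra_simps)
    moreover have "s * D' > 0" using s0 D by (simp add: D'_def)
    moreover have "psi v w v = Cv X (G w) v" by (simp add: psi_def)
    moreover have "psi v w ys = Cv X (G w) ys + s^2 * d" by (simp add: psi_def nys)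
    ultimately have "psi v w ys < psi v w v" using cv by argo
    moreover have "psi v w v \<le> psi v w ys" using prox_spec[OF w, of v] fx ysH by auto
    ultimately show False by simp
  qed
qed

lemma prox_cont:
  "continuous_on ((convex hull X) \<times> W) (\<lambda>p. prox (fst p) (snd p))"
  unfolding continuous_on_sequentially
proof (intro allI ballI impI, elim conjE)
  fix ps :: "nat \<Rightarrow> (real^'d) \<times> 'w" and p
  assume p: "p \<in> (convex hull X) \<times> W" and psS: "\<forall>n. ps n \<in> (convex hull X) \<times> W" and lim: "ps \<longlonglongrightarrow> p"
  define v where "v = fst p"
  define w where "w = snd p"
  define vs where "vs m = fst (ps m)" for m
  define ws where "ws m = snd (ps m)" for m
  have vH: "v \<in> convex hull X" and wW: "w \<in> W" using p by (auto simp: v_def w_def mem_Times_iff)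
  have vsH: "vs m \<in> convex hull X" and wsW: "ws m \<in> W" for m using psS by (auto simp: vs_def ws_def mem_Times_iff)
  have limv: "vs \<longlonglongrightarrow> v" unfolding vs_def v_def by (rule tendsto_fst[OF lim])
  have limw: "ws \<longlonglongrightarrow> w" unfolding ws_def w_def by (rule tendsto_snd[OF lim])
  define ys where "ys m = prox (vs m) (ws m)" for m
  have ysH: "ys m \<in> convex hull X" for m using prox_spec[OF wsW] by (simp add: ys_def)
  have ysmin: "psi (vs m) (ws m) (ys m) \<le> psi (vs m) (ws m) y'" if "y' \<in> convex hull X" for m y'
    using prox_spec[OF wsW, of "vs m"] that by (simp add: ys_def)
  have "ys \<longlonglongrightarrow> prox v w"
  proof (rule compact_unique_limit[OF H(1) ysH])
    fix \<sigma> :: "nat \<Rightarrow> nat" and l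
    assume \<sigma>: "strict_mono \<sigma>" and ll: "(\<lambda>m. ys (\<sigma> m)) \<longlonglongrightarrow> l"
    have lH: "l \<in> convex hull X"
      by (rule closed_sequentially[OF compact_imp_closed[OF H(1)] _ ll]) (rule ysH)
    have lv: "(\<lambda>m. vs (\<sigma> m)) \<longlonglongrightarrow> v" using LIMSEQ_subseq_LIMSEQ[OF limv \<sigma>] by (simp add: o_def)
    have lw: "(\<lambda>m. ws (\<sigma> m)) \<longlonglongrightarrow> w" using LIMSEQ_subseq_LIMSEQ[OF limw \<sigma>] by (simp add: o_def)
    define om where "om m = Hc * norm (ws (\<sigma> m) - w) powr \<gamma>" for m
    have lom: "om \<longlonglongrightarrow> 0"
    proof -
      have "(\<lambda>m. norm (ws (\<sigma> m) - w)) \<longlonglongrightarrow> 0"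
        using tendsto_diff[OF lw tendsto_const[of w]] by (simp add: tendsto_norm_zero_iff)
      then have "(\<lambda>m. norm (ws (\<sigma> m) - w) powr \<gamma>) \<longlonglongrightarrow> 0"
        by (rule tendsto_zero_powrI) (use gam in auto)
      then have "(\<lambda>m. Hc * norm (ws (\<sigma> m) - w) powr \<gamma>) \<longlonglongrightarrow> Hc * 0"
        by (intro tendsto_mult tendsto_const)
      then show ?thesis by (simp add: om_def[abs_def])
    qed
    have lmin: "psi v w l \<le> psi v w y'" if y': "y' \<in> convex hull X" for y'
    proof (rule ccontr)
      assume neg: "\<not> psi v w l \<le> psi v w y'"
      define \<delta> where "\<delta> = (psi v w l - psi v w y') / 2"
      have \<delta>: "\<delta> > 0" using neg by (simp add: \<delta>_def)
      have key: "Cv X (G w) (ys (\<sigma> m)) + (norm (ys (\<sigma> m) - vs (\<sigma> m)))^2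
               \<le> Cv X (G w) y' + 2 * om m + (norm (y' - vs (\<sigma> m)))^2" for m
      proof -
        have a: "Cv X (G w) (ys (\<sigma> m)) \<le> Cv X (G (ws (\<sigma> m))) (ys (\<sigma> m)) + om m"
          by (rule Cv_close[OF X lsc[OF wW] lsc[OF wsW] ysH])
             (use hold[OF wW wsW] in \<open>auto simp: om_def abs_minus_commute\<close>)
        have b: "Cv X (G (ws (\<sigma> m))) y' \<le> Cv X (G w) y' + om m"
          by (rule Cv_close[OF X lsc[OF wsW] lsc[OF wW] y'])
             (use hold[OF wW wsW] in \<open>auto simp: om_def\<close>)
        have c: "psi (vs (\<sigma> m)) (ws (\<sigma> m)) (ys (\<sigma> m)) \<le> psi (vs (\<sigma> m)) (ws (\<sigma> m)) y'"
          by (rule ysmin[OF y'])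
        show ?thesis using a b c unfolding psi_def by argo
      qed
      have ev: "\<forall>\<^sub>F m in sequentially. Cv X (G w) l - \<delta> < Cv X (G w) (ys (\<sigma> m))"
        by (rule seq_lscD[OF Cv_lsc[OF X lsc[OF wW]] _ lH ll]) (use ysH \<delta> in auto)
      have ev2: "\<forall>\<^sub>F m in sequentially. Cv X (G w) l - \<delta> + (norm (ys (\<sigma> m) - vs (\<sigma> m)))^2
                   \<le> Cv X (G w) y' + 2 * om m + (norm (y' - vs (\<sigma> m)))^2"
        using ev
      proof eventually_elim
        case (elim m)
        then show ?case using key[of m] by argo
      qed
      have L1: "(\<lambda>m. Cv X (G w) l - \<delta> + (norm (ys (\<sigma> m) - vs (\<sigma> m)))^2) \<longlonglongrightarrow> Cv X (G w) l - \<delta> + (norm (l - v))^2"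
        by (intro tendsto_intros ll lv)
      have L2: "(\<lambda>m. Cv X (G w) y' + 2 * om m + (norm (y' - vs (\<sigma> m)))^2) \<longlonglongrightarrow> Cv X (G w) y' + 2 * 0 + (norm (y' - v))^2"
        by (intro tendsto_intros lom lv)
      have "Cv X (G w) l - \<delta> + (norm (l - v))^2 \<le> Cv X (G w) y' + 2 * 0 + (norm (y' - v))^2"
        by (rule tendsto_le[OF trivial_limit_sequentially L2 L1 ev2])
      then show False using \<delta> unfolding \<delta>_def psi_def by argo
    qed
    have pm: "\<forall>y'\<in>convex hull X. psi v w (prox v w) \<le> psi v w y'" and pH: "prox v w \<in> convex hull X"
      using prox_spec[OF wW] by auto
    show "l = prox v w" by (rule prox_unique[OF wW lH pH]) (use lmin pm in auto)
  qed
  then show "((\<lambda>p. prox (fst p) (snd p)) \<circ> ps) \<longlonglongrightarrow> prox (fst p) (snd p)"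
    by (simp add: o_def ys_def[abs_def] vs_def ws_def v_def w_def)
qed

end

definition wagg :: "nat \<Rightarrow> (nat \<Rightarrow> real^'d^'q) \<Rightarrow> nat \<Rightarrow> (nat \<Rightarrow> real^'d) \<Rightarrow> real^'q" where
  "wagg n A i x = (1 / real n) *\<^sub>R (\<Sum>j\<in>{..<n}-{i}. A j *v x j)"

definition gfun :: "nat \<Rightarrow> (nat \<Rightarrow> real^'d \<Rightarrow> real^'q \<Rightarrow> real) \<Rightarrow> (nat \<Rightarrow> real^'d^'q) \<Rightarrow> nat
    \<Rightarrow> real^'q \<Rightarrow> real^'d \<Rightarrow> real" where
  "gfun n \<theta> A i w z = \<theta> i z ((1 / real n) *\<^sub>R (A i *v z) + w)"

lemma agg_split:
  fixes A :: "nat \<Rightarrow> real^'d^'q"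
  assumes "i < n"
  shows "(1 / real n) *\<^sub>R (\<Sum>j<n. A j *v (x(i := z)) j) = (1 / real n) *\<^sub>R (A i *v z) + wagg n A i x"
proof -
  have "(\<Sum>j<n. A j *v (x(i := z)) j) = A j0 *v (x(i := z)) j0 + (\<Sum>j\<in>{..<n}-{j0}. A j *v (x(i := z)) j)"
    if "j0 = i" for j0
    using sum.remove[of "{..<n}" i "\<lambda>j. A j *v (x(i := z)) j"] assms that by simp
  also have "(\<Sum>j\<in>{..<n}-{i}. A j *v (x(i := z)) j) = (\<Sum>j\<in>{..<n}-{i}. A j *v x j)"
    by (rule sum.cong) auto
  finally have "(\<Sum>j<n. A j *v (x(i := z)) j) = A i *v z + (\<Sum>j\<in>{..<n}-{i}. A j *v x j)" by simp
  then show ?thesis by (simp add: wagg_def scaleR_add_right)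
qed

lemma game_cost_split:
  assumes "i < n"
  shows "game_cost n \<theta> A i z x = gfun n \<theta> A i (wagg n A i x) z"
  by (simp only: game_cost_def gfun_def agg_split[OF assms])

lemma wagg_upd: "wagg n A i (x(i := y)) = wagg n A i x"
  unfolding wagg_def by (intro arg_cong[where f = "\<lambda>s. _ *\<^sub>R s"] sum.cong) auto

lemma wagg_cong: "(\<And>j. j < n \<Longrightarrow> x j = x' j) \<Longrightarrow> wagg n A i x = wagg n A i x'"
  unfolding wagg_def by (intro arg_cong[where f = "\<lambda>s. _ *\<^sub>R s"] sum.cong) auto

lemma conv_cost_Cv:
  fixes X :: "nat \<Rightarrow> (real^'d) set"
  assumes "i < n"
  shows "convexified_cost n X \<theta> A i y x = Cv (X i) (gfun n \<theta> A i (wagg n A i x)) y"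
proof -
  let ?G = "gfun n \<theta> A i (wagg n A i x)"
  have "{(\<Sum>k<CARD('d) + 1. \<alpha> k * game_cost n \<theta> A i (z k) x) | \<alpha> z.
            (\<forall>k<CARD('d) + 1. 0 \<le> \<alpha> k \<and> z k \<in> X i) \<and>
            (\<Sum>k<CARD('d) + 1. \<alpha> k) = 1 \<and>
            y = (\<Sum>k<CARD('d) + 1. \<alpha> k *\<^sub>R z k)} = costF ?G ` reps (X i) y"
  proof -
    have e1: "(\<Sum>k<CARD('d) + 1. \<alpha> k * game_cost n \<theta> A i (z k) x) = costF ?G (\<alpha>, z)" for \<alpha> z
      by (simp only: costF_def game_cost_split[OF assms] fst_conv snd_conv)
    have e2: "((\<forall>k<CARD('d) + 1. 0 \<le> \<alpha> k \<and> z k \<in> X i) \<and>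
            (\<Sum>k<CARD('d) + 1. \<alpha> k) = 1 \<and> y = (\<Sum>k<CARD('d) + 1. \<alpha> k *\<^sub>R z k))
          \<longleftrightarrow> (\<alpha>, z) \<in> reps (X i) y" for \<alpha> z
      by (simp only: reps_def mem_Collect_eq case_prod_conv)
    show ?thesis
    proof (rule Set.set_eqI)
      fix v
      show "v \<in> {(\<Sum>k<CARD('d) + 1. \<alpha> k * game_cost n \<theta> A i (z k) x) | \<alpha> z.
            (\<forall>k<CARD('d) + 1. 0 \<le> \<alpha> k \<and> z k \<in> X i) \<and>
            (\<Sum>k<CARD('d) + 1. \<alpha> k) = 1 \<and>
            y = (\<Sum>k<CARD('d) + 1. \<alpha> k *\<^sub>R z k)} \<longleftrightarrow> v \<in> costF ?G ` reps (X i) y"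
        unfolding e1 e2 mem_Collect_eq image_iff
      proof
        assume "\<exists>\<alpha> z. v = costF ?G (\<alpha>, z) \<and> (\<alpha>, z) \<in> reps (X i) y"
        then show "\<exists>r\<in>reps (X i) y. v = costF ?G r" by blast
      next
        assume "\<exists>r\<in>reps (X i) y. v = costF ?G r"
        then obtain r where "r \<in> reps (X i) y" "v = costF ?G r" by blast
        then show "\<exists>\<alpha> z. v = costF ?G (\<alpha>, z) \<and> (\<alpha>, z) \<in> reps (X i) y"
          by (intro exI[of _ "fst r"] exI[of _ "snd r"]) simp
      qed
    qed
  qed
  then show ?thesis unfolding convexified_cost_def Cv_def by simp
qed

lemma cont_mv:
  fixes A :: "real^'d^'q"
  assumes "continuous_on S f"
  shows "continuous_on S (\<lambda>x. A *v f x)"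
proof -
  have "continuous_on UNIV ((*v) A)"
    by (rule linear_continuous_on) (simp add: matrix_vector_mul_linear[unfolded linear_conv_bounded_linear])
  from continuous_on_compose2[OF this assms] show ?thesis by simp
qed

lemma tendsto_mv:
  fixes A :: "real^'d^'q"
  assumes "f \<longlonglongrightarrow> l"
  shows "(\<lambda>m. A *v f m) \<longlonglongrightarrow> A *v l"
proof -
  have c: "continuous_on UNIV (\<lambda>x. A *v x)" by (rule cont_mv) (rule continuous_on_id)
  show ?thesis by (rule continuous_on_tendsto_compose[OF c assms]) auto
qed

lemma player_proxsetup:
  fixes X :: "nat \<Rightarrow> (real^'d) set" and A :: "nat \<Rightarrow> real^'d^'q"
  assumes Xne: "X i \<noteq> {}" and Xc: "closed (X i)" and Xb: "bounded (X i)"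
    and lsc: "\<forall>y\<in>\<Omega>. lsc_on (X i) (\<lambda>xi. \<theta> i xi y)"
    and gam: "\<gamma> > 0"
    and hold: "\<forall>xi\<in>X i. \<forall>y\<in>\<Omega>. \<forall>y'\<in>\<Omega>. \<bar>\<theta> i xi y' - \<theta> i xi y\<bar> \<le> Hc * norm (y' - y) powr \<gamma>"
  shows "proxsetup (X i) {w. \<forall>z\<in>X i. (1 / real n) *\<^sub>R (A i *v z) + w \<in> \<Omega>} (gfun n \<theta> A i) Hc \<gamma>"
proof (unfold_locales)
  show "compact (X i)" using Xc Xb by (simp add: compact_eq_bounded_closed)
  show "X i \<noteq> {}" by (rule Xne)
  show "\<gamma> > 0" by (rule gam)
next
  fix w w' x
  assume w: "w \<in> {w. \<forall>z\<in>X i. (1 / real n) *\<^sub>R (A i *v z) + w \<in> \<Omega>}"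
    and w': "w' \<in> {w. \<forall>z\<in>X i. (1 / real n) *\<^sub>R (A i *v z) + w \<in> \<Omega>}" and x: "x \<in> X i"
  have "\<bar>\<theta> i x ((1 / real n) *\<^sub>R (A i *v x) + w') - \<theta> i x ((1 / real n) *\<^sub>R (A i *v x) + w)\<bar>
        \<le> Hc * norm (((1 / real n) *\<^sub>R (A i *v x) + w') - ((1 / real n) *\<^sub>R (A i *v x) + w)) powr \<gamma>"
    using hold x w w' by blast
  then show "\<bar>gfun n \<theta> A i w' x - gfun n \<theta> A i w x\<bar> \<le> Hc * norm (w' - w) powr \<gamma>"
    by (simp add: gfun_def)
next
  fix w
  assume w: "w \<in> {w. \<forall>z\<in>X i. (1 / real n) *\<^sub>R (A i *v z) + w \<in> \<Omega>}"
  let ?a = "\<lambda>z. (1 / real n) *\<^sub>R (A i *v z)"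
  show "seq_lsc (X i) (gfun n \<theta> A i w)"
    unfolding seq_lsc_def
  proof (intro allI impI, elim conjE)
    fix s z t
    assume s: "\<forall>m. s m \<in> X i" and z: "z \<in> X i" and lim: "s \<longlonglongrightarrow> z" and t: "t < gfun n \<theta> A i w z"
    define y0 where "y0 = ?a z + w"
    have y0: "y0 \<in> \<Omega>" using w z by (simp add: y0_def)
    define e where "e = \<theta> i z y0 - t"
    have e: "e > 0" using t by (simp add: e_def gfun_def y0_def)
    have ev1: "\<forall>\<^sub>F m in sequentially. \<theta> i z y0 - e/2 < \<theta> i (s m) y0"
      by (rule seq_lscD[OF lsc_on_imp_seq[OF lsc[rule_format, OF y0]] _ z lim]) (use s e in auto)
    have "(\<lambda>m. ?a (s m)) \<longlonglongrightarrow> ?a z" by (intro tendsto_scaleR tendsto_const tendsto_mv lim)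
    then have "(\<lambda>m. ?a (s m) - ?a z) \<longlonglongrightarrow> 0" by (simp add: LIM_zero)
    then have "(\<lambda>m. norm (?a (s m) - ?a z)) \<longlonglongrightarrow> 0" by (simp add: tendsto_norm_zero_iff)
    then have "(\<lambda>m. norm (?a (s m) - ?a z) powr \<gamma>) \<longlonglongrightarrow> 0"
      by (rule tendsto_zero_powrI) (use gam in auto)
    then have "(\<lambda>m. Hc * norm (?a (s m) - ?a z) powr \<gamma>) \<longlonglongrightarrow> Hc * 0"
      by (intro tendsto_mult tendsto_const)
    then have ev2: "\<forall>\<^sub>F m in sequentially. Hc * norm (?a (s m) - ?a z) powr \<gamma> < e/2"
      using e by (intro order_tendstoD(2)) auto
    show "\<forall>\<^sub>F m in sequentially. t < gfun n \<theta> A i w (s m)"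
      using ev1 ev2
    proof eventually_elim
      case (elim m)
      have ym: "?a (s m) + w \<in> \<Omega>" using w s by auto
      have "\<bar>\<theta> i (s m) (?a (s m) + w) - \<theta> i (s m) y0\<bar> \<le> Hc * norm ((?a (s m) + w) - y0) powr \<gamma>"
        using hold s ym y0 by blast
      moreover have "(?a (s m) + w) - y0 = ?a (s m) - ?a z" by (simp add: y0_def)
      ultimately have "\<theta> i (s m) y0 - Hc * norm (?a (s m) - ?a z) powr \<gamma> \<le> \<theta> i (s m) (?a (s m) + w)"
        by (simp add: abs_le_iff)
      moreover have "t = \<theta> i z y0 - e" by (simp add: e_def)
      ultimately show ?case using elim by (simp add: gfun_def)
    qed
  qed
qed

theorem proposition1:
  fixes n :: nat
    and X :: "nat \<Rightarrow> (real^'d) set"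
    and A :: "nat \<Rightarrow> real^'d^'q"
    and \<Omega> :: "(real^'q) set"
    and \<theta> :: "nat \<Rightarrow> real^'d \<Rightarrow> real^'q \<Rightarrow> real"
  assumes X_ne: "\<forall>i<n. X i \<noteq> {}"
    and X_closed: "\<forall>i<n. closed (X i)"
    and X_bounded: "\<forall>i<n. bounded (X i)"
    and \<Omega>_nbhd: "\<exists>U. open U \<and> U \<subseteq> \<Omega> \<and>
          {(1 / real n) *\<^sub>R (\<Sum>j<n. A j *v y j) | y. \<forall>j<n. y j \<in> convex hull (X j)} \<subseteq> U"
    and lsc: "\<forall>i<n. \<forall>y\<in>\<Omega>. lsc_on (X i) (\<lambda>xi. \<theta> i xi y)"
    and holder: "\<exists>H \<gamma>. H > 0 \<and> \<gamma> > 0 \<and>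
          (\<forall>i<n. \<forall>xi\<in>X i. \<forall>y\<in>\<Omega>. \<forall>y'\<in>\<Omega>.
             \<bar>\<theta> i xi y' - \<theta> i xi y\<bar> \<le> H * norm (y' - y) powr \<gamma>)"
  shows "\<exists>x. pure_NE_convexified n X \<theta> A x"
proof (cases "n = 0")
  case True
  show ?thesis by (rule exI[of _ "\<lambda>_. 0"]) (simp add: pure_NE_convexified_def True)
next
  case False
  then have npos: "n > 0" by simp
  obtain U where U: "open U" "U \<subseteq> \<Omega>"
    "{(1 / real n) *\<^sub>R (\<Sum>j<n. A j *v y j) | y. \<forall>j<n. y j \<in> convex hull (X j)} \<subseteq> U"
    using \<Omega>_nbhd by blast
  obtain Hc \<gamma> where hg: "Hc > 0" "\<gamma> > 0"
    "\<forall>i<n. \<forall>xi\<in>X i. \<forall>y\<in>\<Omega>. \<forall>y'\<in>\<Omega>. \<bar>\<theta> i xi y' - \<theta> i xi y\<bar> \<le> Hc * norm (y' - y) powr \<gamma>"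
    using holder by blast
  define Hh where "Hh j = convex hull (X j)" for j
  define W where "W i = {w. \<forall>z\<in>X i. (1 / real n) *\<^sub>R (A i *v z) + w \<in> \<Omega>}" for i
  have PS: "proxsetup (X i) (W i) (gfun n \<theta> A i) Hc \<gamma>" if i: "i < n" for i
    unfolding W_def
    by (rule player_proxsetup) (use i X_ne X_closed X_bounded lsc hg in auto)
  have cX: "compact (X i)" if "i < n" for i
    using that X_closed X_bounded by (simp add: compact_eq_bounded_closed)
  have Hcomp: "compact (Hh j)" "convex (Hh j)" "Hh j \<noteq> {}" "closed (Hh j)" if "j < n" for j
    using cX[OF that] X_ne that by (auto simp: Hh_def compact_convex_hull compact_imp_closed)
  have XsubH: "X j \<subseteq> Hh j" for j unfolding Hh_def by (rule hull_subset)
  have Wmem: "wagg n A i x \<in> W i" if i: "i < n" and xH: "\<forall>j<n. x j \<in> Hh j" for i x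
  proof -
    have "(1 / real n) *\<^sub>R (A i *v z) + wagg n A i x \<in> \<Omega>" if z: "z \<in> X i" for z
    proof -
      have eq: "(1 / real n) *\<^sub>R (A i *v z) + wagg n A i x = (1 / real n) *\<^sub>R (\<Sum>j<n. A j *v (x(i := z)) j)"
        using agg_split[OF i, of A x z] by simp
      have "\<forall>j<n. (x(i := z)) j \<in> convex hull (X j)" using xH z XsubH by (auto simp: Hh_def)
      then have "(1 / real n) *\<^sub>R (\<Sum>j<n. A j *v (x(i := z)) j)
          \<in> {(1 / real n) *\<^sub>R (\<Sum>j<n. A j *v y j) | y. \<forall>j<n. y j \<in> convex hull (X j)}" by blast
      then have inU: "(1 / real n) *\<^sub>R (\<Sum>j<n. A j *v (x(i := z)) j) \<in> U" by (rule subsetD[OF U(3)])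
      from subsetD[OF U(2) inU] show ?thesis unfolding eq .
    qed
    then show ?thesis by (simp add: W_def)
  qed
  define P where "P j v w = proxsetup.prox (X j) (gfun n \<theta> A j) v w" for j v w
  define \<rho> where "\<rho> x j = closest_point (Hh j) (x j)" for x :: "nat \<Rightarrow> real^'d" and j
  have \<rho>H: "\<rho> x j \<in> Hh j" if "j < n" for x j
    unfolding \<rho>_def by (rule closest_point_in_set) (use Hcomp that in auto)
  have \<rho>W: "wagg n A j (\<rho> x) \<in> W j" if "j < n" for x j
    by (rule Wmem[OF that]) (use \<rho>H in auto)
  define Y where "Y x j = P j (\<rho> x j) (wagg n A j (\<rho> x))" for x j
  have YH: "Y x j \<in> Hh j" if "j < n" for x j
    using proxsetup.prox_spec[OF PS[OF that] \<rho>W[OF that], of "\<rho> x j"] by (simp add: Y_def P_def Hh_def)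
  have "bounded (\<Union>j\<in>{..<n}. Hh j)"
    by (rule bounded_UN) (use Hcomp in \<open>auto intro: compact_imp_bounded\<close>)
  then obtain B where B: "B > 0" "\<And>j y. j < n \<Longrightarrow> y \<in> Hh j \<Longrightarrow> norm y \<le> B"
    unfolding bounded_pos by auto
  define D where "D = CARD('d)"
  have D: "D > 0" by (simp add: D_def)
  define m where "m = n * D"
  have m: "m > 0" using npos D by (simp add: m_def)
  obtain e where e: "bij_betw e {0..<D} (UNIV::'d set)"
    using ex_bij_betw_nat_finite[of "UNIV::'d set"] by (auto simp: D_def)
  define ei where "ei = inv_into {0..<D} e"
  have ei1: "ei k < D" for k
  proof -
    have "k \<in> e ` {0..<D}" using e by (simp add: bij_betw_def)
    then show ?thesis unfolding ei_def using inv_into_into[of k e "{0..<D}"] by auto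
  qed
  have ei2: "e (ei k) = k" for k
  proof -
    have "k \<in> e ` {0..<D}" using e by (simp add: bij_betw_def)
    then show ?thesis unfolding ei_def by (rule f_inv_into_f)
  qed
  define R where "R = real m * (B + 1)"
  have R: "R > 0" using m B by (simp add: R_def)
  define dec where "dec u j = (\<chi> k. R * u (j * D + ei k))" for u :: "nat \<Rightarrow> real" and j
  define enc where "enc y p = (if p < m then (y (p div D)) $ e (p mod D) / R else 0)"
    for y :: "nat \<Rightarrow> real^'d" and p
  define T where "T u = enc (Y (dec u))" for u
  have dec_enc: "dec (enc y) j = y j" if j: "j < n" for y j
  proof -
    have "(dec (enc y) j) $ k = y j $ k" for k
    proof -
      have "j * D + ei k < j * D + D" using ei1[of k] by simp
      also have "\<dots> = Suc j * D" by simp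
      also have "\<dots> \<le> n * D" using j by (intro mult_right_mono) auto
      finally have lt: "j * D + ei k < m" by (simp add: m_def)
      have dv: "(j * D + ei k) div D = j" and md: "(j * D + ei k) mod D = ei k" using ei1[of k] D by auto
      show ?thesis using lt dv md R by (simp add: dec_def enc_def ei2)
    qed
    then show ?thesis by (simp add: vec_eq_iff)
  qed
  have contT: "continuous_on (BallE m) (\<lambda>u. T u p)" if p: "p < m" for p
  proof -
    define j where "j = p div D"
    have j: "j < n" using p D by (simp add: j_def m_def less_mult_imp_div_less)
    have c1: "continuous_on UNIV (\<lambda>u. dec u j')" for j'
      unfolding dec_def
      by (intro continuous_on_vec_lambda continuous_on_mult_left continuous_on_product_coordinates)
    have c2: "continuous_on UNIV (\<lambda>u. \<rho> (dec u) j')" if "j' < n" for j'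
      unfolding \<rho>_def by (rule continuous_on_compose2[OF continuous_on_closest_point c1]) (use Hcomp that in auto)
    have c3: "continuous_on UNIV (\<lambda>u. wagg n A j (\<rho> (dec u)))"
      unfolding wagg_def by (intro continuous_on_scaleR continuous_on_const continuous_on_sum cont_mv c2) auto
    have c4: "continuous_on UNIV (\<lambda>u. (\<rho> (dec u) j, wagg n A j (\<rho> (dec u))))"
      by (intro continuous_on_Pair c2[OF j] c3)
    have img: "(\<lambda>u. (\<rho> (dec u) j, wagg n A j (\<rho> (dec u)))) ` UNIV \<subseteq> (convex hull (X j)) \<times> W j"
      using \<rho>H[OF j] \<rho>W[OF j] by (auto simp: Hh_def)
    have c5: "continuous_on UNIV (\<lambda>u. P j (\<rho> (dec u) j) (wagg n A j (\<rho> (dec u))))"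
      using continuous_on_compose2[OF proxsetup.prox_cont[OF PS[OF j]] c4 img] by (simp add: P_def)
    have c6: "continuous_on UNIV (\<lambda>u. Y (dec u) j $ e (p mod D) / R)"
      unfolding Y_def by (intro continuous_on_divide continuous_on_const continuous_on_component c5) (use R in auto)
    have "continuous_on UNIV (\<lambda>u. T u p)"
      using c6 p by (simp add: T_def enc_def j_def)
    then show ?thesis by (rule continuous_on_subset) simp
  qed
  have into: "T u \<in> BallE m" for u
  proof -
    have bnd: "\<bar>T u p\<bar> \<le> 1 / real m" for p
    proof (cases "p < m")
      case True
      define j where "j = p div D"
      have j: "j < n" using True D by (simp add: j_def m_def less_mult_imp_div_less)
      have "\<bar>Y (dec u) j $ e (p mod D)\<bar> \<le> norm (Y (dec u) j)" by (rule component_le_norm_cart)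
      also have "\<dots> \<le> B" using B(2)[OF j YH[OF j]] .
      finally have a: "\<bar>Y (dec u) j $ e (p mod D)\<bar> \<le> B" .
      have "\<bar>T u p\<bar> = \<bar>Y (dec u) j $ e (p mod D)\<bar> / R" using True R by (simp add: T_def enc_def j_def)
      also have "\<dots> \<le> B / R" using a R by (simp add: divide_right_mono)
      also have "\<dots> \<le> 1 / real m"
      proof -
        have "B * real m \<le> R" using m B by (simp add: R_def algebra_simps)
        then show ?thesis using R m by (simp add: field_simps)
      qed
      finally show ?thesis .
    next
      case False
      then show ?thesis by (simp add: T_def enc_def)
    qed
    have sq: "(T u p)^2 \<le> (1 / real m)^2" for p
      using bnd[of p] by (metis abs_le_square_iff abs_of_nonneg less_eq_real_def of_nat_0_le_iff zero_le_divide_1_iff)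
    have "sqn m (T u) \<le> (\<Sum>p<m. (1 / real m)^2)" unfolding sqn_def by (rule sum_mono) (rule sq)
    also have "\<dots> = 1 / real m" using m by (simp add: power2_eq_square)
    also have "\<dots> \<le> 1" using m by simp
    finally have "sqn m (T u) \<le> 1" .
    moreover have "\<forall>i\<ge>m. T u i = 0" by (simp add: T_def enc_def)
    ultimately show ?thesis by (simp add: BallE_def)
  qed
  obtain pp where mpp: "m = Suc pp" using m by (cases m) auto
  obtain u0 where u0: "u0 \<in> BallE m" "T u0 = u0"
    using brouwer_E[OF mpp contT into] by blast
  define x0 where "x0 = dec u0"
  have x0Y: "x0 j = Y x0 j" if j: "j < n" for j
  proof -
    have "x0 j = dec (T u0) j" using u0(2) by (simp add: x0_def)
    also have "\<dots> = Y (dec u0) j" unfolding T_def by (rule dec_enc[OF j])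
    finally show ?thesis by (simp add: x0_def)
  qed
  have x0H: "x0 j \<in> Hh j" if "j < n" for j using x0Y[OF that] YH[OF that] by simp
  have \<rho>x0: "\<rho> x0 j = x0 j" if "j < n" for j
    unfolding \<rho>_def by (rule closest_point_self[OF x0H[OF that]])
  have wx0: "wagg n A j (\<rho> x0) = wagg n A j x0" for j by (rule wagg_cong) (simp add: \<rho>x0)
  have fixp: "proxsetup.prox (X j) (gfun n \<theta> A j) (x0 j) (wagg n A j x0) = x0 j" if j: "j < n" for j
    using x0Y[OF j] by (simp add: Y_def P_def \<rho>x0[OF j] wx0)
  have opt: "\<forall>y\<in>convex hull (X j). Cv (X j) (gfun n \<theta> A j (wagg n A j x0)) (x0 j)
                \<le> Cv (X j) (gfun n \<theta> A j (wagg n A j x0)) y" if j: "j < n" for j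
  proof (rule proxsetup.prox_fixed[OF PS[OF j] _ _ fixp[OF j]])
    show "wagg n A j x0 \<in> W j" by (rule Wmem[OF j]) (use x0H in auto)
    show "x0 j \<in> convex hull X j" using x0H[OF j] by (simp add: Hh_def)
  qed
  show ?thesis
  proof (intro exI[of _ x0])
    show "pure_NE_convexified n X \<theta> A x0" unfolding pure_NE_convexified_def
    proof (intro conjI allI impI ballI)
      fix i assume "i < n"
      then show "x0 i \<in> convex hull X i" using x0H by (simp add: Hh_def)
    next
      fix i y assume i: "i < n" and y: "y \<in> convex hull X i"
      show "convexified_cost n X \<theta> A i (x0 i) x0 \<le> convexified_cost n X \<theta> A i y (x0(i := y))"
        unfolding conv_cost_Cv[OF i] wagg_upd using opt[OF i] y by blast
    qed
  qed
qed

end
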